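(* Let $A$ be a set with a ternary operation $p\colon A^3\to A$ and two constants $0,1\in A$ satisfying, for all $a,b,c,b_1,b_2,b_3\in A$: (T1) $p(0,a,1)=a$; (T2) $p(a,b,a)=a$; (T3) $p(a,p(b_1,b_2,b_3),c)=p(p(a,b_1,c),b_2,p(a,b_3,c))$; (T4) $p(a,0,b)=a=p(b,1,a)$. Define $\bar{a}=p(1,a,0)$, $a\cdot b=p(0,a,b)$, $a\circ b=p(a,b,1)$ and $a+b=p(a,b,\bar a)$. Then the following conditions are equivalent: (i) $(A,\circ,\cdot,\bar{()},0,1)$ is a Boolean algebra (with $\circ$ as join, $\cdot$ as meet, $\bar{()}$ as complement, $0$ as bottom and $1$ as top); (ii) $(A,+,\cdot,0,1)$ is a Boolean ring; (iii) $p(a,b,c)=(\bar{b}\cdot a)\circ (b\cdot c)$ for all $a,b,c\in A$; (iv) $p(a,a,b)=a\cdot b$ for all $a,b\in A$; (v) $p(a,b,b)=a\circ b$ for all $a,b\in A$.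
   Context: A Boolean ring is a unitary ring (with additive identity $0$ and multiplicative identity $1$) in which every element $x$ satisfies $x\cdot x=x$. *)

theory Defs
  imports "HOL-Algebra.Ring"
begin

definition is_boolean_algebra ::
  "('a \<Rightarrow> 'a \<Rightarrow> 'a) \<Rightarrow> ('a \<Rightarrow> 'a \<Rightarrow> 'a) \<Rightarrow> ('a \<Rightarrow> 'a) \<Rightarrow> 'a \<Rightarrow> 'a \<Rightarrow> bool" where
  "is_boolean_algebra jn mt cpl bt tp \<longleftrightarrow>
     (\<forall>x y. jn x y = jn y x) \<and> (\<forall>x y. mt x y = mt y x) \<and>
     (\<forall>x y z. jn (jn x y) z = jn x (jn y z)) \<and>
     (\<forall>x y z. mt (mt x y) z = mt x (mt y z)) \<and>
     (\<forall>x y. jn x (mt x y) = x) \<and> (\<forall>x y. mt x (jn x y) = x) \<and>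
     (\<forall>x y z. mt x (jn y z) = jn (mt x y) (mt x z)) \<and>
     (\<forall>x y z. jn x (mt y z) = mt (jn x y) (jn x z)) \<and>
     (\<forall>x. jn x bt = x) \<and> (\<forall>x. mt x tp = x) \<and>
     (\<forall>x. mt x (cpl x) = bt) \<and> (\<forall>x. jn x (cpl x) = tp)"

definition ring_of :: "('a \<Rightarrow> 'a \<Rightarrow> 'a) \<Rightarrow> ('a \<Rightarrow> 'a \<Rightarrow> 'a) \<Rightarrow> 'a \<Rightarrow> 'a \<Rightarrow> 'a ring" where
  "ring_of pl mu z u = \<lparr>carrier = UNIV, mult = mu, one = u, zero = z, add = pl\<rparr>"

definition is_boolean_ring :: "('a \<Rightarrow> 'a \<Rightarrow> 'a) \<Rightarrow> ('a \<Rightarrow> 'a \<Rightarrow> 'a) \<Rightarrow> 'a \<Rightarrow> 'a \<Rightarrow> bool" where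
  "is_boolean_ring pl mu z u \<longleftrightarrow>
     ring (ring_of pl mu z u) \<and> (\<forall>x. mu x x = x)"

end

theory Submission
  imports Defs
begin

locale tern =
  fixes p :: "'a \<Rightarrow> 'a \<Rightarrow> 'a \<Rightarrow> 'a" and z u :: 'a
  assumes t1: "\<And>a. p z a u = a"
    and t2: "\<And>a b. p a b a = a"
    and t3: "\<And>a b1 b2 b3 c. p a (p b1 b2 b3) c = p (p a b1 c) b2 (p a b3 c)"
    and t4a: "\<And>a b. p a z b = a"
    and t4b: "\<And>a b. p b u a = a"
begin

lemma sw: "p a (p u b z) c = p c b a"
  by (simp add: t3 t4a t4b)

lemma ii: "p u (p u a z) z = a"
  by (simp add: t3 t4a t4b t1 t2)

lemma ma: "p z (p z x y) w = p z x (p z y w)"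
  by (simp add: t3 t4a)

lemma ja: "p (p x y u) w u = p x (p y w u) u"
  by (simp add: t3 t4b)

end

locale tern4 = tern +
  assumes h: "\<And>a b. p a a b = p z a b"
begin

lemma mc: "p z a b = p z b a"
proof -
  have c1_f9: "p x0 (p x1 x2 x3) x4 = p (p x0 x1 x4) x2 (p x0 x3 x4)" for x0 x1 x2 x3 x4 by (metis t3)
  have c1_f14: "p z x0 u = x0" for x0 by (metis t1)
  have c1_f15: "p x1 u x0 = x0" for x0 x1 by (metis t4b)
  have c1_f16: "p x0 z x1 = x0" for x0 x1 by (metis t4a)
  have c1_f17: "p x0 x1 x0 = x0" for x0 x1 by (metis t2)
  have c1_f18: "p x0 x0 x1 = p z x0 x1" for x0 x1 by (metis h)
  have c1_f19: "p x0 (p x1 x2 x3) x4 = p (p x0 x1 x4) x2 (p x0 x3 x4)" for x0 x1 x2 x3 x4 by (metis c1_f9)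
  have c1_f21: "p z x5 x5 = x5" for x5 by (metis c1_f18 c1_f17)
  have c1_f22: "p x0 x0 u = x0" for x0 by (metis c1_f18 c1_f14)
  have c1_f23: "z = p x6 x6 z" for x6 by (metis c1_f18 c1_f17)
  have c1_f36: "p z (p x7 x8 x9) x7 = p x7 x8 (p z x9 x7)" for x7 x8 x9 by (metis c1_f19 c1_f21)
  have c1_f38: "p x14 (p u x16 x17) x15 = p x15 x16 (p x14 x17 x15)" for x14 x15 x16 x17 by (metis c1_f19 c1_f15)
  have c1_f39: "p x18 (p z x20 x21) x19 = p x18 x20 (p x18 x21 x19)" for x18 x19 x20 x21 by (metis c1_f19 c1_f16)
  have c1_f48: "p x14 (p x16 x17 u) x15 = p (p x14 x16 x15) x17 x15" for x14 x15 x16 x17 by (metis c1_f19 c1_f15)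
  have c1_f49: "p x18 (p x20 x21 z) x19 = p (p x18 x20 x19) x21 x18" for x18 x19 x20 x21 by (metis c1_f19 c1_f16)
  have c1_f57: "p z (p x17 x18 x19) (p x17 x20 x19) = p x17 (p x18 (p x17 x18 x19) x20) x19" for x17 x18 x19 x20 by (metis c1_f19 c1_f18)
  have c1_f82: "z = p z x17 (p (p u x17 x18) x18 z)" for x17 x18 by (metis c1_f38 c1_f23)
  have c1_f89: "p x13 (p u x15 z) x14 = p x14 x15 x13" for x13 x14 x15 by (metis c1_f38 c1_f16)
  have c1_f92: "p x24 (p u x25 x24) z = p z x25 z" for x24 x25 by (metis c1_f38 c1_f23)
  have c1_f123: "z = p x24 (p u x25 x24) z" for x24 x25 by (metis c1_f92 c1_f17)
  have c1_f161: "p z x3 z = p x1 (p u x3 (p u x2 x1)) z" for x1 x2 x3 by (metis c1_f38 c1_f123)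
  have c1_f169: "z = p x1 (p u x3 (p u x2 x1)) z" for x1 x2 x3 by (metis c1_f161 c1_f17)
  have c1_f184: "z = p z x1 (p u x1 z)" for x1 by (metis c1_f82 c1_f16)
  have c1_f231: "p x35 (p z x36 x35) z = p x35 x36 z" for x35 x36 by (metis c1_f39 c1_f23)
  have c1_f233: "p x40 (p z x41 x40) u = p x40 x41 x40" for x40 x41 by (metis c1_f39 c1_f22)
  have c1_f240: "p z x21 (p x21 x22 x23) = p x21 (p z x21 x22) x23" for x21 x22 x23 by (metis c1_f39 c1_f18)
  have c1_f272: "p x40 (p z x41 x40) u = x40" for x40 x41 by (metis c1_f233 c1_f17)
  have c1_f290: "p x14 (p x14 x12 (p z x13 x14)) u = x14" for x12 x13 x14 by (metis c1_f272 c1_f38)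
  have c1_f330: "p x2 x1 (p x2 (p u x1 z) x3) = p x2 z x3" for x1 x2 x3 by (metis c1_f39 c1_f184)
  have c1_f339: "p x2 x1 (p x2 (p u x1 z) x3) = x2" for x1 x2 x3 by (metis c1_f330 c1_f16)
  have c1_f340: "p x2 x1 (p x3 x1 x2) = x2" for x1 x2 x3 by (metis c1_f339 c1_f89)
  have c1_f438: "p x39 x38 x37 = p (p x39 x38 x37) x38 x37" for x37 x38 x39 by (metis c1_f340 c1_f340)
  have c1_f446: "p z x16 (p x17 x16 x16) = x16" for x16 x17 by (metis c1_f340 c1_f18)
  have c1_f702: "p z (p u x2 z) x3 = p x3 x2 (p u x2 z)" for x2 x3 by (metis c1_f89 c1_f18)
  have c1_f709: "p (p x19 (p u x18 z) x17) x18 x17 = x17" for x17 x18 x19 by (metis c1_f89 c1_f340)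
  have c1_f776: "p x3 x2 z = p x3 x2 (p u x2 z)" for x2 x3 by (metis c1_f702 c1_f89)
  have c1_f778: "p (p x17 x18 x19) x18 x17 = x17" for x17 x18 x19 by (metis c1_f709 c1_f89)
  have c1_f805: "p x9 (p x9 x11 u) x10 = p (p z x9 x10) x11 x10" for x10 x11 x9 by (metis c1_f48 c1_f18)
  have c1_f837: "z = p x27 (p x28 (p x27 x28 z) u) z" for x27 x28 by (metis c1_f48 c1_f23)
  have c1_f1421: "p x18 (p u x17 z) z = p x18 (p x18 x17 z) z" for x17 x18 by (metis c1_f231 c1_f89)
  have c1_f1468: "p z x17 x18 = p x18 (p x18 x17 z) z" for x17 x18 by (metis c1_f1421 c1_f89)
  have c1_f1681: "p x80 x81 z = p z (p x80 x81 z) x80" for x80 x81 by (metis c1_f49 c1_f21)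
  have c1_f1729: "p z x23 (p x23 (p x24 x23 z) x25) = x23" for x23 x24 x25 by (metis c1_f446 c1_f49)
  have c1_f2982: "p x12 (p u x13 z) z = p (p u (p u x13 z) z) x13 x12" for x12 x13 by (metis c1_f776 c1_f89)
  have c1_f3059: "p x12 (p u x13 z) z = p (p z x13 (p u z z)) x13 x12" for x12 x13 by (metis c1_f2982 c1_f38)
  have c1_f3060: "p x12 (p u x13 z) z = p (p z x13 u) x13 x12" for x12 x13 by (metis c1_f3059 c1_f16)
  have c1_f3061: "p x13 x13 x12 = p x12 (p u x13 z) z" for x12 x13 by (metis c1_f3060 c1_f14)
  have c1_f6342: "p u (p u x18 z) z = x18" for x18 by (metis c1_f3061 c1_f22)
  have c1_f12693: "p z x102 (p x102 x103 u) = p x102 (p x102 x102 x103) u" for x102 x103 by (metis c1_f57 c1_f22)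
  have c1_f12694: "p z x104 (p x104 x106 u) = p x104 (p (p z x105 x104) x104 x106) u" for x104 x105 x106 by (metis c1_f57 c1_f272)
  have c1_f12785: "p u z (p u x24 x23) = p z (p u x23 (p u x24 x23)) (p u z (p u x24 x23))" for x23 x24 by (metis c1_f57 c1_f169)
  have c1_f13093: "p x445 (p u x445 z) x446 = p u (p z (p u x445 z) (p u x446 z)) z" for x445 x446 by (metis c1_f6342 c1_f57)
  have c1_f13204: "u = p z (p u x23 (p u x24 x23)) u" for x23 x24 by (metis c1_f12785 c1_f16)
  have c1_f13443: "p x445 (p u x445 z) x446 = p u (p (p u x446 z) x445 z) z" for x445 x446 by (metis c1_f13093 c1_f89)
  have c1_f13444: "p x445 (p u x445 z) x446 = p u (p u (p x446 x445 u) z) z" for x445 x446 by (metis c1_f13443 c1_f48)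
  have c1_f13445: "p x445 (p u x445 z) x446 = p x446 x445 u" for x445 x446 by (metis c1_f13444 c1_f6342)
  have c1_f14061: "u = p u x6 (p u x7 x6)" for x6 x7 by (metis c1_f13204 c1_f14)
  have c1_f14200: "u = p u x20 (p x20 x19 u)" for x19 x20 by (metis c1_f14061 c1_f89)
  have c1_f14411: "u = p x3 (p u x3 x4) u" for x3 x4 by (metis c1_f14200 c1_f38)
  have c1_f14611: "p u (p u x92 x93) x92 = x92" for x92 x93 by (metis c1_f778 c1_f14411)
  have c1_f14779: "p x6 x6 (p u x7 x6) = x6" for x6 x7 by (metis c1_f14611 c1_f38)
  have c1_f14953: "p x24 x24 (p x24 x23 u) = x24" for x23 x24 by (metis c1_f14779 c1_f89)
  have c1_f15211: "p z x13 (p x13 x14 u) = x13" for x13 x14 by (metis c1_f14953 c1_f18)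
  have c1_f15300: "p x102 (p x102 x102 x103) u = x102" for x102 x103 by (metis c1_f12693 c1_f15211)
  have c1_f15301: "p x104 (p (p z x105 x104) x104 x106) u = x104" for x104 x105 x106 by (metis c1_f12694 c1_f15211)
  have c1_f15345: "p x27 (p x27 (p z x27 x28) x29) u = x27" for x27 x28 x29 by (metis c1_f15300 c1_f39)
  have c1_f17860: "z = p (p z x1 x0) x0 z" for x0 x1 by (metis c1_f837 c1_f15301)
  have c1_f17992: "z = p (p x19 x20 z) x19 z" for x19 x20 by (metis c1_f17860 c1_f1681)
  have c1_f18464: "z = p x2 (p x3 x2 u) z" for x2 x3 by (metis c1_f17992 c1_f48)
  have c1_f18885: "p x25 z z = p z (p x26 x25 u) x25" for x25 x26 by (metis c1_f1468 c1_f18464)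
  have c1_f18993: "p z (p x26 x25 u) x25 = x25" for x25 x26 by (metis c1_f18885 c1_f16)
  have c1_f19409: "p x11 x12 (p z x13 x11) = p z x11 (p x11 x12 (p z x13 x11))" for x11 x12 x13 by (metis c1_f18993 c1_f290)
  have c1_f98896: "p z x21 (p x22 x21 u) = x21" for x21 x22 by (metis c1_f1729 c1_f13445)
  have c1_f100899: "p z (p x103 (p z x103 x104) x105) x103 = p z x103 (p x103 x104 (p z x105 x103))" for x103 x104 x105 by (metis c1_f240 c1_f36)
  have c1_f101751: "p x103 x104 (p z x105 x103) = p z (p x103 (p z x103 x104) x105) x103" for x103 x104 x105 by (metis c1_f100899 c1_f19409)
  have c1_f102763: "p x86 (p z x86 x87) x88 = p z (p x86 (p z x86 x87) x88) x86" for x86 x87 x88 by (metis c1_f98896 c1_f15345)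
  have c1_f103246: "p x86 (p z x86 x87) x88 = p x86 x87 (p z x88 x86)" for x86 x87 x88 by (metis c1_f102763 c1_f101751)
  have c1_f108178: "p (p z x128 x129) x128 x129 = p x128 (p z x128 u) x129" for x128 x129 by (metis c1_f805 c1_f18)
  have c1_f108759: "p x128 u (p z x129 x128) = p (p z x128 x129) x128 x129" for x128 x129 by (metis c1_f108178 c1_f103246)
  have c1_f108760: "p z x128 x129 = p x128 u (p z x129 x128)" for x128 x129 by (metis c1_f108759 c1_f438)
  have c1_f114030: "p z x10 x11 = p z (p x10 u x11) x10" for x10 x11 by (metis c1_f108760 c1_f36)
  have c1_f115150: "p z x10 x11 = p z x11 x10" for x10 x11 by (metis c1_f114030 c1_f15)
  show ?thesis by (metis c1_f115150)
qed

lemma jc: "p a b u = p b a u"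
proof -
  have c2_f10: "p x0 (p x1 x2 x3) x4 = p (p x0 x1 x4) x2 (p x0 x3 x4)" for x0 x1 x2 x3 x4 by (metis t3)
  have c2_f15: "p z x0 u = x0" for x0 by (metis t1)
  have c2_f16: "p x1 u x0 = x0" for x0 x1 by (metis t4b)
  have c2_f17: "p x0 z x1 = x0" for x0 x1 by (metis t4a)
  have c2_f18: "p x0 x1 x0 = x0" for x0 x1 by (metis t2)
  have c2_f19: "p z x0 x1 = p z x1 x0" for x0 x1 by (metis mc)
  have c2_f20: "p x0 x0 x1 = p z x0 x1" for x0 x1 by (metis h)
  have c2_f21: "p x0 (p x1 x2 x3) x4 = p (p x0 x1 x4) x2 (p x0 x3 x4)" for x0 x1 x2 x3 x4 by (metis c2_f10)
  have c2_f39: "p z x7 x7 = x7" for x7 by (metis c2_f20 c2_f18)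
  have c2_f40: "p x0 x0 u = x0" for x0 by (metis c2_f20 c2_f15)
  have c2_f41: "p z x4 x3 = p x3 x3 x4" for x3 x4 by (metis c2_f20 c2_f19)
  have c2_f43: "z = p x10 x10 z" for x10 by (metis c2_f20 c2_f18)
  have c2_f121: "p z (p x19 x20 x21) x19 = p x19 x20 (p z x21 x19)" for x19 x20 x21 by (metis c2_f21 c2_f39)
  have c2_f123: "p x26 (p u x28 x29) x27 = p x27 x28 (p x26 x29 x27)" for x26 x27 x28 x29 by (metis c2_f21 c2_f16)
  have c2_f124: "p x30 (p z x32 x33) x31 = p x30 x32 (p x30 x33 x31)" for x30 x31 x32 x33 by (metis c2_f21 c2_f17)
  have c2_f137: "p z (p x20 x21 x19) x19 = p (p z x20 x19) x21 x19" for x19 x20 x21 by (metis c2_f21 c2_f39)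
  have c2_f139: "p x26 (p x28 x29 u) x27 = p (p x26 x28 x27) x29 x27" for x26 x27 x28 x29 by (metis c2_f21 c2_f16)
  have c2_f140: "p x30 (p x32 x33 z) x31 = p (p x30 x32 x31) x33 x30" for x30 x31 x32 x33 by (metis c2_f21 c2_f17)
  have c2_f146: "p x53 (p x54 x55 x53) u = p (p x53 x54 u) x55 x53" for x53 x54 x55 by (metis c2_f21 c2_f40)
  have c2_f154: "p z (p x29 x30 x31) (p x29 x32 x31) = p x29 (p x30 (p x29 x30 x31) x32) x31" for x29 x30 x31 x32 by (metis c2_f21 c2_f20)
  have c2_f168: "p (p z x20 x19) x21 x19 = p z x19 (p x20 x21 x19)" for x19 x20 x21 by (metis c2_f137 c2_f19)
  have c2_f192: "z = p z x35 (p (p u x35 x36) x36 z)" for x35 x36 by (metis c2_f123 c2_f43)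
  have c2_f199: "p z (p u x15 x14) x14 = p x14 x15 x14" for x14 x15 by (metis c2_f123 c2_f39)
  have c2_f202: "p x22 (p u x24 z) x23 = p x23 x24 x22" for x22 x23 x24 by (metis c2_f123 c2_f17)
  have c2_f250: "p z (p u x15 x14) x14 = x14" for x14 x15 by (metis c2_f199 c2_f18)
  have c2_f272: "p x4 x4 (p u x3 x4) = x4" for x3 x4 by (metis c2_f250 c2_f41)
  have c2_f273: "p z x8 (p u x7 x8) = x8" for x7 x8 by (metis c2_f250 c2_f19)
  have c2_f431: "z = p z x1 (p u x1 z)" for x1 by (metis c2_f192 c2_f17)
  have c2_f579: "p z (p u x8 z) x9 = p x9 x8 (p u x8 z)" for x8 x9 by (metis c2_f202 c2_f20)
  have c2_f591: "p z x34 (p u x33 z) = p x34 x33 z" for x33 x34 by (metis c2_f202 c2_f19)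
  have c2_f614: "p x33 x33 (p x33 x32 u) = x33" for x32 x33 by (metis c2_f272 c2_f202)
  have c2_f615: "p z x35 (p x35 x34 u) = x35" for x34 x35 by (metis c2_f273 c2_f202)
  have c2_f652: "p x9 x8 (p u x8 z) = p x9 x8 z" for x8 x9 by (metis c2_f579 c2_f202)
  have c2_f772: "p x31 x30 (p x31 (p u x30 z) x32) = p x31 z x32" for x30 x31 x32 by (metis c2_f124 c2_f431)
  have c2_f812: "p x21 (p z x24 (p u x22 z)) x23 = p x21 x24 (p x23 x22 x21)" for x21 x22 x23 x24 by (metis c2_f124 c2_f202)
  have c2_f869: "p x31 x30 (p x31 (p u x30 z) x32) = x31" for x30 x31 x32 by (metis c2_f772 c2_f17)
  have c2_f870: "p x31 x30 (p x32 x30 x31) = x31" for x30 x31 x32 by (metis c2_f869 c2_f202)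
  have c2_f887: "p x21 x24 (p x23 x22 x21) = p x21 (p x24 x22 z) x23" for x21 x22 x23 x24 by (metis c2_f812 c2_f591)
  have c2_f1316: "p u x19 z = p (p (p u x19 z) x20 u) x19 z" for x19 x20 by (metis c2_f615 c2_f202)
  have c2_f1332: "p u x19 z = p (p u (p x19 x20 z) z) x19 z" for x19 x20 by (metis c2_f1316 c2_f140)
  have c2_f1333: "p u x19 z = p (p u x19 (p z x20 u)) x19 z" for x19 x20 by (metis c2_f1332 c2_f887)
  have c2_f1334: "p u x19 z = p (p z (p u x19 x20) u) x19 z" for x19 x20 by (metis c2_f1333 c2_f121)
  have c2_f1335: "p u x19 z = p (p u x19 x20) x19 z" for x19 x20 by (metis c2_f1334 c2_f15)
  have c2_f1363: "p x55 x56 u = p (p x55 x56 u) x55 x55" for x55 x56 by (metis c2_f870 c2_f614)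
  have c2_f7897: "p x15 (p u x16 z) z = p (p u (p u x16 z) z) x16 x15" for x15 x16 by (metis c2_f652 c2_f202)
  have c2_f8012: "p x15 (p u x16 z) z = p (p z x16 (p u z z)) x16 x15" for x15 x16 by (metis c2_f7897 c2_f123)
  have c2_f8013: "p x15 (p u x16 z) z = p (p x16 z z) x16 x15" for x15 x16 by (metis c2_f8012 c2_f591)
  have c2_f8014: "p x16 x16 x15 = p x15 (p u x16 z) z" for x15 x16 by (metis c2_f8013 c2_f17)
  have c2_f17976: "p u (p u x28 z) z = x28" for x28 by (metis c2_f8014 c2_f40)
  have c2_f18647: "p u x30 x31 = p u (p z x30 (p u x31 z)) z" for x30 x31 by (metis c2_f17976 c2_f123)
  have c2_f18742: "p u x30 x31 = p u (p x30 x31 z) z" for x30 x31 by (metis c2_f18647 c2_f591)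
  have c2_f23648: "p u (p u x15 x16) z = p z x15 (p (p u (p u x15 x16) x17) x16 z)" for x15 x16 x17 by (metis c2_f1335 c2_f123)
  have c2_f23696: "p u (p u x83 x84) z = p z x83 (p (p u (p u x83 x84) x85) x84 z)" for x83 x84 x85 by (metis c2_f123 c2_f1335)
  have c2_f23726: "p z x15 (p u x16 z) = p z x15 (p (p u (p u x15 x16) x17) x16 z)" for x15 x16 x17 by (metis c2_f23648 c2_f123)
  have c2_f23727: "p x15 x16 z = p z x15 (p (p u (p u x15 x16) x17) x16 z)" for x15 x16 x17 by (metis c2_f23726 c2_f591)
  have c2_f23746: "p x83 x84 z = p u (p u x83 x84) z" for x83 x84 by (metis c2_f23696 c2_f23727)
  have c2_f76973: "p x779 (p u x779 z) x780 = p u (p z (p u x779 z) (p u x780 z)) z" for x779 x780 by (metis c2_f17976 c2_f154)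
  have c2_f78360: "p x779 (p u x779 z) x780 = p u (p (p u x779 z) x780 z) z" for x779 x780 by (metis c2_f76973 c2_f591)
  have c2_f78361: "p x779 (p u x779 z) x780 = p u (p u (p x779 x780 u) z) z" for x779 x780 by (metis c2_f78360 c2_f139)
  have c2_f78362: "p x779 x780 u = p x779 (p u x779 z) x780" for x779 x780 by (metis c2_f78361 c2_f17976)
  have c2_f87586: "p u (p (p u x326 x327) x328 z) z = p (p x326 x327 z) x328 u" for x326 x327 x328 by (metis c2_f140 c2_f23746)
  have c2_f87837: "p (p x326 x327 z) x328 u = p u (p u x326 x327) x328" for x326 x327 x328 by (metis c2_f87586 c2_f18742)
  have c2_f127763: "p x4 x5 u = p x5 x4 x4" for x4 x5 by (metis c2_f78362 c2_f202)
  have c2_f191123: "p x0 x1 u = p x0 (p x1 x0 x0) u" for x0 x1 by (metis c2_f146 c2_f1363)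
  have c2_f214595: "p z u (p (p x367 z z) x368 u) = p (p z x367 u) x368 u" for x367 x368 by (metis c2_f168 c2_f191123)
  have c2_f214627: "p (p x454 z z) x455 u = p z u (p x454 x455 u)" for x454 x455 by (metis c2_f168 c2_f127763)
  have c2_f215390: "p z u (p (p x367 z z) x368 u) = p z (p x367 x368 u) u" for x367 x368 by (metis c2_f214595 c2_f139)
  have c2_f215391: "p x367 x368 u = p z u (p (p x367 z z) x368 u)" for x367 x368 by (metis c2_f215390 c2_f15)
  have c2_f215392: "p x367 x368 u = p z u (p u (p u x367 z) x368)" for x367 x368 by (metis c2_f215391 c2_f87837)
  have c2_f215393: "p x367 x368 u = p z u (p x368 x367 u)" for x367 x368 by (metis c2_f215392 c2_f202)
  have c2_f215495: "p x455 x454 u = p (p x454 z z) x455 u" for x454 x455 by (metis c2_f214627 c2_f215393)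
  have c2_f215496: "p x455 x454 u = p x454 x455 u" for x454 x455 by (metis c2_f215495 c2_f17)
  show ?thesis by (metis c2_f215496)
qed

lemma p5: "p a b b = p a b u"
proof -
  have p45_f9: "p x0 (p x1 x2 x3) x4 = p (p x0 x1 x4) x2 (p x0 x3 x4)" for x0 x1 x2 x3 x4 by (metis t3)
  have p45_f14: "p z x0 u = x0" for x0 by (metis t1)
  have p45_f15: "p x1 u x0 = x0" for x0 x1 by (metis t4b)
  have p45_f16: "p x0 z x1 = x0" for x0 x1 by (metis t4a)
  have p45_f18: "p x0 x0 x1 = p z x0 x1" for x0 x1 by (metis h)
  have p45_f19: "p x0 (p x1 x2 x3) x4 = p (p x0 x1 x4) x2 (p x0 x3 x4)" for x0 x1 x2 x3 x4 by (metis p45_f9)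
  have p45_f22: "p x0 x0 u = x0" for x0 by (metis p45_f18 p45_f14)
  have p45_f38: "p x14 (p u x16 x17) x15 = p x15 x16 (p x14 x17 x15)" for x14 x15 x16 x17 by (metis p45_f19 p45_f15)
  have p45_f48: "p x14 (p x16 x17 u) x15 = p (p x14 x16 x15) x17 x15" for x14 x15 x16 x17 by (metis p45_f19 p45_f15)
  have p45_f57: "p z (p x17 x18 x19) (p x17 x20 x19) = p x17 (p x18 (p x17 x18 x19) x20) x19" for x17 x18 x19 x20 by (metis p45_f19 p45_f18)
  have p45_f89: "p x13 (p u x15 z) x14 = p x14 x15 x13" for x13 x14 x15 by (metis p45_f38 p45_f16)
  have p45_f702: "p z (p u x2 z) x3 = p x3 x2 (p u x2 z)" for x2 x3 by (metis p45_f89 p45_f18)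
  have p45_f776: "p x3 x2 z = p x3 x2 (p u x2 z)" for x2 x3 by (metis p45_f702 p45_f89)
  have p45_f2982: "p x12 (p u x13 z) z = p (p u (p u x13 z) z) x13 x12" for x12 x13 by (metis p45_f776 p45_f89)
  have p45_f3059: "p x12 (p u x13 z) z = p (p z x13 (p u z z)) x13 x12" for x12 x13 by (metis p45_f2982 p45_f38)
  have p45_f3060: "p x12 (p u x13 z) z = p (p z x13 u) x13 x12" for x12 x13 by (metis p45_f3059 p45_f16)
  have p45_f3061: "p x13 x13 x12 = p x12 (p u x13 z) z" for x12 x13 by (metis p45_f3060 p45_f14)
  have p45_f6342: "p u (p u x18 z) z = x18" for x18 by (metis p45_f3061 p45_f22)
  have p45_f13093: "p x445 (p u x445 z) x446 = p u (p z (p u x445 z) (p u x446 z)) z" for x445 x446 by (metis p45_f6342 p45_f57)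
  have p45_f13443: "p x445 (p u x445 z) x446 = p u (p (p u x446 z) x445 z) z" for x445 x446 by (metis p45_f13093 p45_f89)
  have p45_f13444: "p x445 (p u x445 z) x446 = p u (p u (p x446 x445 u) z) z" for x445 x446 by (metis p45_f13443 p45_f48)
  have p45_f13445: "p x445 (p u x445 z) x446 = p x446 x445 u" for x445 x446 by (metis p45_f13444 p45_f6342)
  have p45_f99201: "p x6 x5 u = p x6 x5 x5" for x5 x6 by (metis p45_f13445 p45_f89)
  show ?thesis by (metis p45_f99201)
qed

lemma be: "p b a (p u a z) = p b a z"
  using h[of "p u a z" b] by (simp add: sw)

lemma d1: "p (p a b c) b d = p a b d"
proof -
  have d1_f17: "p x0 (p u x1 z) x2 = p x2 x1 x0" for x0 x1 x2 by (metis sw)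
  have d1_f18: "p x0 (p x1 x2 x3) x4 = p (p x0 x1 x4) x2 (p x0 x3 x4)" for x0 x1 x2 x3 x4 by (metis t3)
  have d1_f23: "p z x0 u = x0" for x0 by (metis t1)
  have d1_f24: "p u (p u x0 z) z = x0" for x0 by (metis ii)
  have d1_f25: "p x1 u x0 = x0" for x0 x1 by (metis t4b)
  have d1_f26: "p x0 z x1 = x0" for x0 x1 by (metis t4a)
  have d1_f27: "p x0 x1 x0 = x0" for x0 x1 by (metis t2)
  have d1_f28: "p x0 x1 u = p x1 x0 u" for x0 x1 by (metis jc)
  have d1_f29: "p x0 x1 u = p x0 x1 x1" for x0 x1 by (metis p5)
  have d1_f30: "p z x0 x1 = p z x1 x0" for x0 x1 by (metis mc)
  have d1_f31: "p x0 x0 x1 = p z x0 x1" for x0 x1 by (metis h)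
  have d1_f33: "p x1 x0 (p u x0 z) = p x1 x0 z" for x0 x1 by (metis be)
  have d1_f34: "p x0 (p u x1 z) x2 = p x2 x1 x0" for x0 x1 x2 by (metis d1_f17)
  have d1_f35: "p x0 (p x1 x2 x3) x4 = p (p x0 x1 x4) x2 (p x0 x3 x4)" for x0 x1 x2 x3 x4 by (metis d1_f18)
  have d1_f55: "p x4 x3 u = p x3 x4 x4" for x3 x4 by (metis d1_f29 d1_f28)
  have d1_f58: "u = p u x10 x10" for x10 by (metis d1_f29 d1_f27)
  have d1_f59: "p x4 x4 u = x4" for x4 by (metis d1_f29 d1_f27)
  have d1_f121: "p z x5 x4 = p x4 x4 x5" for x4 x5 by (metis d1_f31 d1_f30)
  have d1_f124: "z = p x12 x12 z" for x12 by (metis d1_f31 d1_f27)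
  have d1_f165: "p x6 x7 x7 = p x7 x6 x6" for x6 x7 by (metis d1_f55 d1_f29)
  have d1_f218: "p x4 x4 x5 = p x5 x5 x4" for x4 x5 by (metis d1_f121 d1_f31)
  have d1_f390: "p x10 x10 z = p z x10 (p u x10 z)" for x10 by (metis d1_f33 d1_f31)
  have d1_f405: "z = p z x10 (p u x10 z)" for x10 by (metis d1_f390 d1_f124)
  have d1_f498: "p x3 x3 (p u x2 z) = p x3 x2 z" for x2 x3 by (metis d1_f34 d1_f121)
  have d1_f499: "p z x7 (p u x6 z) = p x7 x6 z" for x6 x7 by (metis d1_f34 d1_f30)
  have d1_f507: "p (p u x23 z) x22 x22 = p (p u x23 z) x23 x22" for x22 x23 by (metis d1_f34 d1_f165)
  have d1_f509: "p (p u x27 z) x26 u = p (p u x27 z) x27 x26" for x26 x27 by (metis d1_f34 d1_f55)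
  have d1_f510: "p x28 (p u x29 z) u = p (p u x29 z) x29 x28" for x28 x29 by (metis d1_f34 d1_f29)
  have d1_f516: "p x43 (p u x44 z) z = p (p u (p u x44 z) z) x44 x43" for x43 x44 by (metis d1_f34 d1_f33)
  have d1_f519: "u = p (p u x47 z) x47 u" for x47 by (metis d1_f34 d1_f58)
  have d1_f574: "p (p u x29 z) x29 x28 = p u x29 x28" for x28 x29 by (metis d1_f510 d1_f34)
  have d1_f575: "p (p u x27 z) x26 u = p u x27 x26" for x26 x27 by (metis d1_f509 d1_f574)
  have d1_f576: "p (p u x23 z) x22 x22 = p u x23 x22" for x22 x23 by (metis d1_f507 d1_f574)
  have d1_f577: "p x43 (p u x44 z) z = p x44 x44 x43" for x43 x44 by (metis d1_f516 d1_f24)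
  have d1_f596: "u = p x0 (p u x0 z) u" for x0 by (metis d1_f519 d1_f24)
  have d1_f898: "p u (p u x10 z) x11 = p x11 x10 (p u (p u x10 z) z)" for x10 x11 by (metis d1_f34 d1_f574)
  have d1_f929: "p x11 x10 x10 = p u (p u x10 z) x11" for x10 x11 by (metis d1_f898 d1_f24)
  have d1_f969: "p x1 x0 z = p (p u x0 z) (p u x0 z) x1" for x0 x1 by (metis d1_f577 d1_f24)
  have d1_f1001: "p x4 x4 x3 = p x4 (p u x3 z) z" for x3 x4 by (metis d1_f577 d1_f218)
  have d1_f1304: "p x0 x1 u = p u (p u x0 z) x1" for x0 x1 by (metis d1_f575 d1_f24)
  have d1_f1338: "p u x27 (p u x26 z) = p u x26 (p u x27 z)" for x26 x27 by (metis d1_f575 d1_f34)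
  have d1_f1691: "p x9 x8 x8 = p u (p u x9 z) x8" for x8 x9 by (metis d1_f929 d1_f165)
  have d1_f3712: "p x52 (p z x54 x55) x53 = p x52 x54 (p x52 x55 x53)" for x52 x53 x54 x55 by (metis d1_f35 d1_f26)
  have d1_f3713: "p x56 (p u x58 x59) x57 = p x57 x58 (p x56 x59 x57)" for x56 x57 x58 x59 by (metis d1_f35 d1_f25)
  have d1_f3748: "p u (p x185 x186 x187) x185 = p u x186 (p u x187 x185)" for x185 x186 x187 by (metis d1_f35 d1_f58)
  have d1_f3775: "p x52 (p x54 x55 z) x53 = p (p x52 x54 x53) x55 x52" for x52 x53 x54 x55 by (metis d1_f35 d1_f26)
  have d1_f3811: "p u (p x186 x187 x185) x185 = p (p u x186 x185) x187 u" for x185 x186 x187 by (metis d1_f35 d1_f58)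
  have d1_f3983: "p x23 x22 (p x23 (p u x22 z) x24) = p x23 z x24" for x22 x23 x24 by (metis d1_f3712 d1_f405)
  have d1_f3984: "p x27 x25 (p x27 (p u x26 z) x28) = p x27 (p x25 x26 z) x28" for x25 x26 x27 x28 by (metis d1_f3712 d1_f499)
  have d1_f4041: "p x3 (p z x5 x3) x4 = p x3 x5 (p x3 (p u x4 z) z)" for x3 x4 x5 by (metis d1_f3712 d1_f1001)
  have d1_f4059: "p x60 (p z x61 x60) z = p x60 x61 z" for x60 x61 by (metis d1_f3712 d1_f124)
  have d1_f4068: "p x85 (p z x86 x85) u = p x85 x86 x85" for x85 x86 by (metis d1_f3712 d1_f59)
  have d1_f4069: "p x87 (p z x88 (p u x87 z)) u = p x87 x88 u" for x87 x88 by (metis d1_f3712 d1_f596)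
  have d1_f4181: "p x23 x22 (p x23 (p u x22 z) x24) = x23" for x22 x23 x24 by (metis d1_f3983 d1_f26)
  have d1_f4182: "p x23 x22 (p x24 x22 x23) = x23" for x22 x23 x24 by (metis d1_f4181 d1_f34)
  have d1_f4183: "p x27 (p x25 x26 z) x28 = p x27 x25 (p x28 x26 x27)" for x25 x26 x27 x28 by (metis d1_f3984 d1_f34)
  have d1_f4239: "p x3 (p z x5 x3) x4 = p x3 x5 (p z x4 x3)" for x3 x4 x5 by (metis d1_f4041 d1_f34)
  have d1_f4255: "p x85 (p z x86 x85) u = x85" for x85 x86 by (metis d1_f4068 d1_f27)
  have d1_f4256: "p x87 x88 u = p x87 (p x88 x87 z) u" for x87 x88 by (metis d1_f4069 d1_f499)
  have d1_f4352: "p x7 x6 (p x7 x7 x6) = x7" for x6 x7 by (metis d1_f4182 d1_f218)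
  have d1_f4356: "p x15 x15 (p u (p u x14 z) x15) = x15" for x14 x15 by (metis d1_f4182 d1_f1691)
  have d1_f4358: "p x19 x19 (p x19 x18 x18) = x19" for x18 x19 by (metis d1_f4182 d1_f165)
  have d1_f4417: "p z x16 (p x17 x16 x16) = x16" for x16 x17 by (metis d1_f4182 d1_f31)
  have d1_f4420: "p (p x26 (p u x25 z) x24) x25 x24 = x24" for x24 x25 x26 by (metis d1_f4182 d1_f34)
  have d1_f4424: "u = p x42 (p x43 (p u x42 z) u) u" for x42 x43 by (metis d1_f4182 d1_f1304)
  have d1_f4425: "u = p (p x45 (p u x44 z) u) x44 x44" for x44 x45 by (metis d1_f4182 d1_f929)
  have d1_f4427: "p u x48 z = p (p x49 (p u x48 z) (p u x48 z)) x48 z" for x48 x49 by (metis d1_f4182 d1_f969)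
  have d1_f4438: "p x24 (p z x27 x25) (p x26 x25 x24) = p x24 x27 x24" for x24 x25 x26 x27 by (metis d1_f3712 d1_f4182)
  have d1_f4451: "p x15 x15 (p x14 x15 u) = x15" for x14 x15 by (metis d1_f4356 d1_f1304)
  have d1_f4454: "p (p x24 x25 x26) x25 x24 = x24" for x24 x25 x26 by (metis d1_f4420 d1_f34)
  have d1_f4455: "u = p x42 (p u x42 x43) u" for x42 x43 by (metis d1_f4424 d1_f34)
  have d1_f4456: "u = p (p u x44 x45) x44 x44" for x44 x45 by (metis d1_f4425 d1_f34)
  have d1_f4458: "p u x48 z = p (p x49 (p u x48 z) u) x48 z" for x48 x49 by (metis d1_f4427 d1_f29)
  have d1_f4459: "p u x48 z = p (p u x48 x49) x48 z" for x48 x49 by (metis d1_f4458 d1_f34)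
  have d1_f4462: "p x24 (p z x27 x25) (p x26 x25 x24) = x24" for x24 x25 x26 x27 by (metis d1_f4438 d1_f27)
  have d1_f4471: "p x4 (p x3 x3 x4) u = x4" for x3 x4 by (metis d1_f4255 d1_f31)
  have d1_f4765: "p x16 (p z x18 x17) (p x16 x16 x17) = p x16 x18 x16" for x16 x17 x18 by (metis d1_f3712 d1_f4352)
  have d1_f4790: "p x16 (p z x18 x17) (p x16 x16 x17) = x16" for x16 x17 x18 by (metis d1_f4765 d1_f27)
  have d1_f4846: "p (p x8 x9 x9) (p u x8 z) z = x8" for x8 x9 by (metis d1_f4358 d1_f577)
  have d1_f4848: "p z x16 (p x16 x17 x17) = x16" for x16 x17 by (metis d1_f4358 d1_f31)
  have d1_f5362: "p z x55 (p u x54 x55) = x55" for x54 x55 by (metis d1_f4417 d1_f576)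
  have d1_f5692: "p (p x5 (p u x4 z) z) x4 x4 = x4" for x4 x5 by (metis d1_f4454 d1_f577)
  have d1_f5727: "p (p x78 x79 z) x78 x78 = x78" for x78 x79 by (metis d1_f4454 d1_f498)
  have d1_f5808: "p (p z x4 x5) x4 x4 = x4" for x4 x5 by (metis d1_f5692 d1_f34)
  have d1_f5883: "u = p u (p (p u x4 x5) (p u x4 x5) x4) x5" for x4 x5 by (metis d1_f4456 d1_f35)
  have d1_f5932: "u = p u (p z (p u x4 x5) x4) x5" for x4 x5 by (metis d1_f5883 d1_f31)
  have d1_f5933: "u = p u (p z x4 (p u x4 x5)) x5" for x4 x5 by (metis d1_f5932 d1_f30)
  have d1_f6742: "p (p x8 x7 u) (p u x7 z) z = x7" for x7 x8 by (metis d1_f4451 d1_f577)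
  have d1_f6867: "p u (p u x18 x19) x18 = x18" for x18 x19 by (metis d1_f4454 d1_f4455)
  have d1_f7546: "p x63 x63 x64 = p z (p x63 x63 x64) x63" for x63 x64 by (metis d1_f4848 d1_f4454)
  have d1_f12575: "p x2 x1 z = p x2 (p x2 x2 x1) z" for x1 x2 by (metis d1_f4059 d1_f121)
  have d1_f12576: "p x4 x3 z = p x4 (p x3 x3 x4) z" for x3 x4 by (metis d1_f4059 d1_f31)
  have d1_f12603: "p x56 (p u x55 z) z = p x56 (p x56 x55 z) z" for x55 x56 by (metis d1_f4059 d1_f34)
  have d1_f12744: "p z x55 x56 = p x56 (p x56 x55 z) z" for x55 x56 by (metis d1_f12603 d1_f34)
  have d1_f14149: "p u (p u x9 x10) z = p x9 (p u x9 x10) z" for x10 x9 by (metis d1_f4459 d1_f6867)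
  have d1_f14283: "p x13 (p z x12 x11) (p x14 x12 x13) = x13" for x11 x12 x13 x14 by (metis d1_f4462 d1_f30)
  have d1_f14434: "p x243 (p z x244 (p u x242 z)) (p x242 x243 x243) = x243" for x242 x243 x244 by (metis d1_f4462 d1_f1691)
  have d1_f14603: "p x243 (p x244 x242 z) (p x242 x243 x243) = x243" for x242 x243 x244 by (metis d1_f14434 d1_f499)
  have d1_f17122: "p z (p x6 x6 x5) x5 = p x5 (p x5 x6 z) z" for x5 x6 by (metis d1_f12744 d1_f12576)
  have d1_f17125: "p x11 (p x11 x12 z) z = p z (p x11 x11 x12) x11" for x11 x12 by (metis d1_f12744 d1_f12575)
  have d1_f17322: "p z x6 x5 = p z (p x6 x6 x5) x5" for x5 x6 by (metis d1_f17122 d1_f12744)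
  have d1_f17325: "p x11 x11 x12 = p x11 (p x11 x12 z) z" for x11 x12 by (metis d1_f17125 d1_f7546)
  have d1_f17498: "p u x23 (p x24 (p u x23 z) z) = p (p u x23 z) x24 u" for x23 x24 by (metis d1_f4256 d1_f575)
  have d1_f17647: "p u x23 (p x24 (p u x23 z) z) = p u (p x23 x24 z) z" for x23 x24 by (metis d1_f17498 d1_f3775)
  have d1_f17648: "p u x23 (p x24 (p u x23 z) z) = p u x23 (p z x24 u)" for x23 x24 by (metis d1_f17647 d1_f4183)
  have d1_f17649: "p u x23 (p x24 (p u x23 z) z) = p z (p u x23 x24) u" for x23 x24 by (metis d1_f17648 d1_f3713)
  have d1_f17650: "p u x23 x24 = p u x23 (p x24 (p u x23 z) z)" for x23 x24 by (metis d1_f17649 d1_f23)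
  have d1_f17651: "p u x23 x24 = p u x23 (p z x23 x24)" for x23 x24 by (metis d1_f17650 d1_f34)
  have d1_f18473: "p x21 x19 (p x21 x21 (p u x20 x19)) = x21" for x19 x20 x21 by (metis d1_f4790 d1_f5362)
  have d1_f19179: "p x63 x64 z = p x63 (p u (p x63 x64 z) z) z" for x63 x64 by (metis d1_f4846 d1_f5727)
  have d1_f19193: "p z x84 x85 = p x84 (p u (p z x84 x85) z) z" for x84 x85 by (metis d1_f4846 d1_f5808)
  have d1_f19317: "p x63 x64 z = p x63 (p u x63 (p z x64 u)) z" for x63 x64 by (metis d1_f19179 d1_f4183)
  have d1_f19318: "p x63 x64 z = p x63 (p z (p u x63 x64) u) z" for x63 x64 by (metis d1_f19317 d1_f3713)
  have d1_f19319: "p x63 x64 z = p x63 (p u x63 x64) z" for x63 x64 by (metis d1_f19318 d1_f23)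
  have d1_f19320: "p x9 x10 z = p u (p u x9 x10) z" for x10 x9 by (metis d1_f14149 d1_f19319)
  have d1_f19328: "p z x84 x85 = p x84 (p u x84 (p u x85 z)) z" for x84 x85 by (metis d1_f19193 d1_f3748)
  have d1_f26506: "p x128 (p z x127 (p u x127 x128)) u = x128" for x127 x128 by (metis d1_f4182 d1_f5933)
  have d1_f32664: "p x54 x55 (p x54 x56 (p x57 x55 x54)) = x54" for x54 x55 x56 x57 by (metis d1_f14283 d1_f3712)
  have d1_f38670: "p u (p x53 x54 z) z = p u (p x53 x54 z) (p x54 (p u (p x53 x54 z) z) (p u (p x53 x54 z) z))" for x53 x54 by (metis d1_f14603 d1_f574)
  have d1_f38823: "p u (p x325 x326 z) z = p u (p x325 x326 z) (p x326 (p u (p x325 x326 z) z) (p u (p x325 x326 z) z))" for x325 x326 by (metis d1_f574 d1_f14603)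
  have d1_f38924: "p u (p x53 x54 z) z = p u (p x53 x54 z) (p x54 (p u (p x53 x54 z) z) u)" for x53 x54 by (metis d1_f38670 d1_f29)
  have d1_f38925: "p u (p x53 x54 z) z = p u (p x53 x54 z) (p u (p x53 x54 z) x54)" for x53 x54 by (metis d1_f38924 d1_f34)
  have d1_f38926: "p u (p x53 x54 z) z = p u (p x53 x54 z) (p u x53 (p x54 x54 u))" for x53 x54 by (metis d1_f38925 d1_f4183)
  have d1_f38927: "p u (p x53 x54 z) z = p u (p x53 x54 z) (p u x53 x54)" for x53 x54 by (metis d1_f38926 d1_f59)
  have d1_f38928: "p u (p x53 x54 z) (p u x53 x54) = p u x53 (p z x54 u)" for x53 x54 by (metis d1_f38927 d1_f4183)
  have d1_f38929: "p u (p x53 x54 z) (p u x53 x54) = p z (p u x53 x54) u" for x53 x54 by (metis d1_f38928 d1_f3713)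
  have d1_f38930: "p u x53 x54 = p u (p x53 x54 z) (p u x53 x54)" for x53 x54 by (metis d1_f38929 d1_f23)
  have d1_f38967: "p u (p x325 x326 z) z = p u (p x325 x326 z) (p x326 (p u (p x325 x326 z) z) u)" for x325 x326 by (metis d1_f38823 d1_f29)
  have d1_f38968: "p u (p x325 x326 z) z = p u (p x325 x326 z) (p u (p x325 x326 z) x326)" for x325 x326 by (metis d1_f38967 d1_f34)
  have d1_f38969: "p u (p x325 x326 z) z = p u (p x325 x326 z) (p u x325 (p x326 x326 u))" for x325 x326 by (metis d1_f38968 d1_f4183)
  have d1_f38970: "p u (p x325 x326 z) z = p u (p x325 x326 z) (p u x325 x326)" for x325 x326 by (metis d1_f38969 d1_f59)
  have d1_f38971: "p u (p x325 x326 z) z = p u x325 x326" for x325 x326 by (metis d1_f38970 d1_f38930)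
  have d1_f45560: "p z x5 x6 = p x6 x6 (p x5 x5 x6)" for x5 x6 by (metis d1_f17322 d1_f121)
  have d1_f79469: "p u x1 x2 = p u x1 (p x2 x2 x1)" for x1 x2 by (metis d1_f17651 d1_f121)
  have d1_f79590: "p u (p u x5 z) x6 = p (p z (p u x5 z) x6) x5 x5" for x5 x6 by (metis d1_f17651 d1_f929)
  have d1_f79903: "p u (p u x5 z) x6 = p (p x6 x5 z) x5 x5" for x5 x6 by (metis d1_f79590 d1_f34)
  have d1_f79904: "p x5 x6 u = p (p x6 x5 z) x5 x5" for x5 x6 by (metis d1_f79903 d1_f1304)
  have d1_f84871: "p x5 (p z x6 x5) (p u x7 x6) = x5" for x5 x6 x7 by (metis d1_f18473 d1_f3712)
  have d1_f89928: "p z (p u x86 x87) x86 = p x86 (p x86 x87 z) z" for x86 x87 by (metis d1_f12744 d1_f19319)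
  have d1_f89949: "p x144 (p x144 x145 z) z = p x144 x144 (p u x144 x145)" for x144 x145 by (metis d1_f17325 d1_f19319)
  have d1_f90300: "p z x87 x86 = p z (p u x86 x87) x86" for x86 x87 by (metis d1_f89928 d1_f12744)
  have d1_f90307: "p z x145 x144 = p x144 x144 (p u x144 x145)" for x144 x145 by (metis d1_f89949 d1_f12744)
  have d1_f119612: "p z x47 (p u x47 x46) = p x46 (p u (p z x47 (p u x47 x46)) z) z" for x46 x47 by (metis d1_f6742 d1_f26506)
  have d1_f119892: "p z x47 (p u x47 x46) = p x46 (p u x47 (p u (p u x47 x46) z)) z" for x46 x47 by (metis d1_f119612 d1_f3748)
  have d1_f119893: "p z x47 (p u x47 x46) = p x46 (p u x47 (p x47 x46 z)) z" for x46 x47 by (metis d1_f119892 d1_f19320)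
  have d1_f160774: "p x179 x181 (p u (p u x179 z) (p x180 x181 x179)) = x179" for x179 x180 x181 by (metis d1_f32664 d1_f1691)
  have d1_f161421: "p x179 x181 (p x179 (p x180 x181 x179) u) = x179" for x179 x180 x181 by (metis d1_f160774 d1_f1304)
  have d1_f189175: "p u (p x26 x26 x27) z = p u x26 (p x26 x27 z)" for x26 x27 by (metis d1_f38971 d1_f17325)
  have d1_f189375: "p (p u x22 x23) x24 u = p u (p x22 x23 z) x24" for x22 x23 x24 by (metis d1_f575 d1_f38971)
  have d1_f189798: "p (p u x22 x23) x24 u = p u x22 (p x24 x23 u)" for x22 x23 x24 by (metis d1_f189375 d1_f4183)
  have d1_f189799: "p u (p x186 x187 x185) x185 = p u x186 (p x187 x185 u)" for x185 x186 x187 by (metis d1_f3811 d1_f189798)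
  have d1_f200592: "p z x35 x34 = p x34 (p u (p x35 x35 x34) z) z" for x34 x35 by (metis d1_f45560 d1_f1001)
  have d1_f201059: "p z x35 x34 = p x34 (p u x35 (p x35 x34 z)) z" for x34 x35 by (metis d1_f200592 d1_f189175)
  have d1_f201060: "p z x47 x46 = p z x47 (p u x47 x46)" for x46 x47 by (metis d1_f119893 d1_f201059)
  have d1_f317816: "p x13 x12 u = p u (p u (p x12 x13 z) z) x13" for x12 x13 by (metis d1_f79904 d1_f1691)
  have d1_f318386: "p x13 x12 u = p u (p u x12 (p x13 z u)) x13" for x12 x13 by (metis d1_f317816 d1_f189799)
  have d1_f318387: "p x13 x12 u = p u (p u x12 x13) x13" for x12 x13 by (metis d1_f318386 d1_f26)
  have d1_f322805: "p u x60 x61 = p u (p x60 (p z x61 (p u x60 x61)) x62) x61" for x60 x61 x62 by (metis d1_f84871 d1_f35)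
  have d1_f323249: "p u x60 x61 = p u (p x60 x61 x62) x61" for x60 x61 x62 by (metis d1_f322805 d1_f5362)
  have d1_f340103: "p u (p u x187 x188) x187 = p u (p u x187 x188) (p z x188 x187)" for x187 x188 by (metis d1_f17651 d1_f90300)
  have d1_f340884: "p u (p u x187 x188) (p z x188 x187) = x187" for x187 x188 by (metis d1_f340103 d1_f6867)
  have d1_f460127: "p x5 (p z x6 (p x7 x6 x5)) u = x5" for x5 x6 x7 by (metis d1_f161421 d1_f3712)
  have d1_f507246: "p z x26 x27 = p x26 x26 (p u x26 x27)" for x26 x27 by (metis d1_f201060 d1_f31)
  have d1_f573769: "p (p x209 x209 x208) x208 u = p u (p u x208 x209) (p x209 x209 x208)" for x208 x209 by (metis d1_f318387 d1_f79469)
  have d1_f574831: "p u (p u x208 x209) (p x209 x209 x208) = p x208 (p x209 x209 x208) u" for x208 x209 by (metis d1_f573769 d1_f28)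
  have d1_f574832: "p u (p u x208 x209) (p x209 x209 x208) = x208" for x208 x209 by (metis d1_f574831 d1_f4471)
  have d1_f580904: "p u x78 (p u x79 z) = p u x79 (p u (p x78 (p u x79 z) x80) z)" for x78 x79 x80 by (metis d1_f323249 d1_f1338)
  have d1_f581103: "p z x317 (p x316 x317 x318) = p (p x316 x317 x318) (p x316 x317 x318) (p u x316 x317)" for x316 x317 x318 by (metis d1_f90307 d1_f323249)
  have d1_f582136: "p u x78 (p u x79 z) = p u x79 (p u (p x80 x79 x78) z)" for x78 x79 x80 by (metis d1_f580904 d1_f34)
  have d1_f604977: "p x147 x148 x149 = p u (p u x147 x148) (p z x148 (p x147 x148 x149))" for x147 x148 x149 by (metis d1_f340884 d1_f323249)
  have d1_f687089: "p z x87 (p x88 x87 x86) = p x86 (p u (p z x87 (p x88 x87 x86)) z) z" for x86 x87 x88 by (metis d1_f6742 d1_f460127)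
  have d1_f687835: "p z x87 (p x88 x87 x86) = p x86 (p u x87 (p u (p x88 x87 x86) z)) z" for x86 x87 x88 by (metis d1_f687089 d1_f3748)
  have d1_f687836: "p x86 (p u x86 (p u x87 z)) z = p z x87 (p x88 x87 x86)" for x86 x87 x88 by (metis d1_f687835 d1_f582136)
  have d1_f687837: "p z x86 x87 = p z x87 (p x88 x87 x86)" for x86 x87 x88 by (metis d1_f687836 d1_f19328)
  have d1_f687845: "p z x318 x317 = p (p x316 x317 x318) (p x316 x317 x318) (p u x316 x317)" for x316 x317 x318 by (metis d1_f581103 d1_f687837)
  have d1_f687848: "p x147 x148 x149 = p u (p u x147 x148) (p z x149 x148)" for x147 x148 x149 by (metis d1_f604977 d1_f687837)
  have d1_f738072: "p z (p x147 x148 x149) x148 = p (p x147 x148 x149) (p x147 x148 x149) (p u x147 x148)" for x147 x148 x149 by (metis d1_f507246 d1_f323249)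
  have d1_f739326: "p z x149 x148 = p z (p x147 x148 x149) x148" for x147 x148 x149 by (metis d1_f738072 d1_f687845)
  have d1_f828950: "p x220 x219 (p z x218 x219) = p u (p u (p x220 x219 (p z x218 x219)) (p z x218 x219)) (p z x218 x219)" for x218 x219 x220 by (metis d1_f574832 d1_f4462)
  have d1_f830445: "p x220 x219 (p z x218 x219) = p u (p u x220 (p x219 (p z x218 x219) u)) (p z x218 x219)" for x218 x219 x220 by (metis d1_f828950 d1_f189799)
  have d1_f830446: "p x220 x219 (p z x218 x219) = p u (p u x220 (p x219 x218 (p z u x219))) (p z x218 x219)" for x218 x219 x220 by (metis d1_f830445 d1_f4239)
  have d1_f830447: "p x220 x219 (p z x218 x219) = p u (p u x220 (p x219 x218 x219)) (p z x218 x219)" for x218 x219 x220 by (metis d1_f830446 d1_f25)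
  have d1_f830448: "p x220 x219 (p z x218 x219) = p u (p u x220 x219) (p z x218 x219)" for x218 x219 x220 by (metis d1_f830447 d1_f27)
  have d1_f830449: "p x220 x219 (p z x218 x219) = p x220 x219 x218" for x218 x219 x220 by (metis d1_f830448 d1_f687848)
  have d1_f1056522: "p x199 x197 (p x196 x197 x198) = p x199 x197 (p z x198 x197)" for x196 x197 x198 x199 by (metis d1_f830449 d1_f739326)
  have d1_f1058402: "p x199 x197 x198 = p x199 x197 (p x196 x197 x198)" for x196 x197 x198 x199 by (metis d1_f1056522 d1_f830449)
  have d1_f1372369: "p (p x365 (p u x364 z) x366) x364 x363 = p x363 (p u x364 z) x366" for x363 x364 x365 x366 by (metis d1_f1058402 d1_f34)
  have d1_f1373974: "p (p x365 (p u x364 z) x366) x364 x363 = p x366 x364 x363" for x363 x364 x365 x366 by (metis d1_f1372369 d1_f34)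
  have d1_f1373975: "p x366 x364 x363 = p (p x366 x364 x365) x364 x363" for x363 x364 x365 x366 by (metis d1_f1373974 d1_f34)
  show ?thesis by (metis d1_f1373975)
qed

lemma d2: "p a b (p c b d) = p a b d"
proof -
  have "p a b (p c b d) = p (p c b d) (p u b z) a" by (simp add: sw)
  also have "\<dots> = p (p d (p u b z) c) (p u b z) a" by (simp add: sw)
  also have "\<dots> = p d (p u b z) a" by (simp add: d1)
  also have "\<dots> = p a b d" by (simp add: sw)
  finally show ?thesis .
qed

lemma P3: "p a b c = p (p z (p u b z) a) (p z b c) u"
proof -
  define X where "X = p a b z"
  have "p (p z (p u b z) a) (p z b c) u = p X (p z b c) u" by (simp add: sw X_def)
  also have "\<dots> = p X b (p X c u)" by (simp add: t3 t4a)
  also have "\<dots> = p a b (p X c u)" by (simp add: X_def d1)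
  also have "p X c u = p c X u" by (rule jc)
  also have "\<dots> = p (p c a u) b c" by (simp add: X_def t3 t4a)
  also have "p a b (p (p c a u) b c) = p a b c" by (rule d2)
  finally show ?thesis by simp
qed

lemma ab2: "p z x (p x y u) = x"
  by (metis jc d2 t1)

lemma ab1: "p x (p z x y) u = x"
proof -
  have "p x (p z x y) u = p x x (p x y u)" by (simp add: t3 t4a)
  also have "\<dots> = p z x (p x y u)" by (rule h)
  finally show ?thesis by (simp add: ab2)
qed

lemma dm: "p z x (p y w u) = p (p z x y) (p z x w) u"
proof -
  define M where "M = p z x y"
  have "p M (p z x w) u = p M x (p M w u)" by (simp add: t3 t4a)
  also have "\<dots> = p z x (p M w u)" by (simp add: M_def d1)
  also have "p M w u = p w M u" by (rule jc)
  also have "\<dots> = p w x (p w y u)" by (simp add: M_def t3 t4a)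
  also have "p z x (p w x (p w y u)) = p z x (p w y u)" by (rule d2)
  also have "\<dots> = p z x (p y w u)" by (simp add: jc)
  finally show ?thesis by (simp add: M_def)
qed

lemma dj: "p x (p z y w) u = p z (p x y u) (p x w u)"
proof -
  have "p x (p z y w) u = p x y (p x w u)" by (simp add: t3 t4a)
  moreover have "p z (p x y u) (p x w u) = p (p z x (p x w u)) y (p x w u)" by (simp add: t3 t4b)
  ultimately show ?thesis by (simp add: ab2)
qed

lemma cm: "p z a (p u a z) = z"
  by (metis d2 t2)

lemma cj: "p x (p u x z) u = u"
  by (metis sw p5 t2)

end
context tern
begin

lemma P3_P4:
  assumes h: "\<And>a b c. p a b c = p (p z (p u b z) a) (p z b c) u"
  shows "p a a b = p z a b"
proof -
  have q34_f9: "p x0 x1 x2 = p (p z (p u x1 z) x0) (p z x1 x2) u" for x0 x1 x2 by (metis h)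
  have q34_f10: "p x0 (p x1 x2 x3) x4 = p (p x0 x1 x4) x2 (p x0 x3 x4)" for x0 x1 x2 x3 x4 by (metis t3)
  have q34_f13: "p z x0 u = x0" for x0 by (metis t1)
  have q34_f14: "p x1 u x0 = x0" for x0 x1 by (metis t4b)
  have q34_f15: "p x0 z x1 = x0" for x0 x1 by (metis t4a)
  have q34_f16: "p x0 x1 x0 = x0" for x0 x1 by (metis t2)
  have q34_f17: "p x0 x1 x2 = p (p z (p u x1 z) x0) (p z x1 x2) u" for x0 x1 x2 by (metis q34_f9)
  have q34_f18: "p x0 (p x1 x2 x3) x4 = p (p x0 x1 x4) x2 (p x0 x3 x4)" for x0 x1 x2 x3 x4 by (metis q34_f10)
  have q34_f21: "p u x0 x1 = p (p u x0 z) (p z x0 x1) u" for x0 x1 by (metis q34_f17 q34_f13)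
  have q34_f41: "p u x0 u = p (p u x0 z) x0 u" for x0 by (metis q34_f21 q34_f13)
  have q34_f48: "u = p (p u x0 z) x0 u" for x0 by (metis q34_f41 q34_f16)
  have q34_f85: "p x3 (p u x5 x6) x4 = p x4 x5 (p x3 x6 x4)" for x3 x4 x5 x6 by (metis q34_f18 q34_f14)
  have q34_f173: "p x11 (p u x13 z) x12 = p x12 x13 x11" for x11 x12 x13 by (metis q34_f85 q34_f15)
  have q34_f245: "u = p u x15 (p u (p u x15 z) z)" for x15 by (metis q34_f173 q34_f48)
  have q34_f276: "u = p u x15 (p z x15 (p u z z))" for x15 by (metis q34_f245 q34_f85)
  have q34_f277: "u = p u x15 (p z x15 u)" for x15 by (metis q34_f276 q34_f15)
  have q34_f278: "u = p u x15 x15" for x15 by (metis q34_f277 q34_f13)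
  have q34_f320: "p x10 x8 (p x9 x8 x10) = p x9 u x10" for x10 x8 x9 by (metis q34_f85 q34_f278)
  have q34_f334: "p x10 x8 (p x9 x8 x10) = x10" for x10 x8 x9 by (metis q34_f320 q34_f14)
  have q34_f400: "p (p x40 (p u x39 z) z) x39 x41 = p z (p z x39 x41) u" for x39 x40 x41 by (metis q34_f17 q34_f334)
  have q34_f415: "p (p x40 (p u x39 z) z) x39 x41 = p z x39 x41" for x39 x40 x41 by (metis q34_f400 q34_f13)
  have q34_f416: "p z x39 x41 = p (p z x39 x40) x39 x41" for x39 x40 x41 by (metis q34_f415 q34_f173)
  have q34_f4963: "p x0 x0 x1 = p z x0 x1" for x0 x1 by (metis q34_f416 q34_f13)
  show ?thesis by (metis q34_f4963)
qed

lemma P5_P4: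
  assumes h: "\<And>a b. p a b b = p a b u"
  shows "p a a b = p z a b"
proof -
  have q54_f9: "p x0 (p x1 x2 x3) x4 = p (p x0 x1 x4) x2 (p x0 x3 x4)" for x0 x1 x2 x3 x4 by (metis t3)
  have q54_f14: "p z x0 u = x0" for x0 by (metis t1)
  have q54_f15: "p x1 u x0 = x0" for x0 x1 by (metis t4b)
  have q54_f16: "p x0 z x1 = x0" for x0 x1 by (metis t4a)
  have q54_f18: "p x0 x1 x1 = p x0 x1 u" for x0 x1 by (metis h)
  have q54_f19: "p x0 (p x1 x2 x3) x4 = p (p x0 x1 x4) x2 (p x0 x3 x4)" for x0 x1 x2 x3 x4 by (metis q54_f9)
  have q54_f21: "p z x0 x0 = x0" for x0 by (metis q54_f18 q54_f14)
  have q54_f34: "p x0 (p u x2 x3) x1 = p x1 x2 (p x0 x3 x1)" for x0 x1 x2 x3 by (metis q54_f19 q54_f15)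
  have q54_f35: "p x4 (p z x6 x7) x5 = p x4 x6 (p x4 x7 x5)" for x4 x5 x6 x7 by (metis q54_f19 q54_f16)
  have q54_f56: "p (p x13 x14 x15) (p x13 x16 x15) u = p x13 (p x14 (p x13 x16 x15) x16) x15" for x13 x14 x15 x16 by (metis q54_f19 q54_f18)
  have q54_f85: "p x6 (p u x8 z) x7 = p x7 x8 x6" for x6 x7 x8 by (metis q54_f34 q54_f16)
  have q54_f409: "p x2 (p u x3 z) u = p (p u x3 z) x3 x2" for x2 x3 by (metis q54_f85 q54_f18)
  have q54_f452: "p (p u x3 z) x3 x2 = p u x3 x2" for x2 x3 by (metis q54_f409 q54_f85)
  have q54_f3513: "p u (p u x13 z) x14 = p x14 x13 (p u (p u x13 z) z)" for x13 x14 by (metis q54_f452 q54_f85)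
  have q54_f3599: "p u (p u x13 z) x14 = p x14 x13 (p z x13 (p u z z))" for x13 x14 by (metis q54_f3513 q54_f34)
  have q54_f3600: "p u (p u x13 z) x14 = p x14 x13 (p z x13 u)" for x13 x14 by (metis q54_f3599 q54_f16)
  have q54_f3601: "p x14 x13 x13 = p u (p u x13 z) x14" for x13 x14 by (metis q54_f3600 q54_f14)
  have q54_f27471: "p u (p u x31 z) z = x31" for x31 by (metis q54_f3601 q54_f21)
  have q54_f28299: "p z x28 x29 = p u (p u x28 (p u x29 z)) z" for x28 x29 by (metis q54_f27471 q54_f35)
  have q54_f28300: "p x30 (p u x31 z) x31 = p u (p (p u x30 z) (p u x31 z) u) z" for x30 x31 by (metis q54_f27471 q54_f56)
  have q54_f28422: "p x30 (p u x31 z) x31 = p u (p u x31 (p (p u x30 z) z u)) z" for x30 x31 by (metis q54_f28300 q54_f34)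
  have q54_f28423: "p u (p u x31 (p u x30 z)) z = p x30 (p u x31 z) x31" for x30 x31 by (metis q54_f28422 q54_f16)
  have q54_f28424: "p z x31 x30 = p x30 (p u x31 z) x31" for x30 x31 by (metis q54_f28423 q54_f28299)
  have q54_f163430: "p z x6 x5 = p x6 x6 x5" for x5 x6 by (metis q54_f28424 q54_f85)
  show ?thesis by (metis q54_f163430)
qed

end

locale tern_ba = tern +
  assumes B_jc: "\<And>x y. p x y u = p y x u"
    and B_mc: "\<And>x y. p z x y = p z y x"
    and B_ab1: "\<And>x y. p x (p z x y) u = x"
    and B_ab2: "\<And>x y. p z x (p x y u) = x"
    and B_dm: "\<And>x y w. p z x (p y w u) = p (p z x y) (p z x w) u"
    and B_dj: "\<And>x y w. p x (p z y w) u = p z (p x y u) (p x w u)"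
    and B_cm: "\<And>x. p z x (p u x z) = z"
    and B_cj: "\<And>x. p x (p u x z) u = u"
begin

lemma P3: "p a b c = p (p z (p u b z) a) (p z b c) u"
proof -
  have g3_f22: "p z x0 u = x0" for x0 by (metis t1)
  have g3_f23: "u = p x0 (p u x0 z) u" for x0 by (metis B_cj)
  have g3_f24: "z = p z x0 (p u x0 z)" for x0 by (metis B_cm)
  have g3_f25: "p x0 x1 u = p x1 x0 u" for x0 x1 by (metis B_jc)
  have g3_f26: "p z x0 x1 = p z x1 x0" for x0 x1 by (metis B_mc)
  have g3_f27: "p x0 (p z x0 x1) u = x0" for x0 x1 by (metis B_ab1)
  have g3_f28: "p z x0 (p x0 x1 u) = x0" for x0 x1 by (metis B_ab2)
  have g3_f29: "p z (p z x0 x1) x2 = p z x0 (p z x1 x2)" for x0 x1 x2 by (metis ma)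
  have g3_f30: "p (p x0 x1 u) x2 u = p x0 (p x1 x2 u) u" for x0 x1 x2 by (metis ja)
  have g3_f31: "p x0 (p z x1 x2) u = p z (p x0 x1 u) (p x0 x2 u)" for x0 x1 x2 by (metis B_dj)
  have g3_f32: "p z x0 (p x1 x2 u) = p (p z x0 x1) (p z x0 x2) u" for x0 x1 x2 by (metis B_dm)
  have g3_f33: "p x0 (p x1 x2 x3) x4 = p (p x0 x1 x4) x2 (p x0 x3 x4)" for x0 x1 x2 x3 x4 by (metis t3)
  have g3_f39: "p z x0 u = x0" for x0 by (metis g3_f22)
  have g3_f41: "u = p x0 (p u x0 z) u" for x0 by (metis g3_f23)
  have g3_f42: "z = p z x0 (p u x0 z)" for x0 by (metis g3_f24)
  have g3_f43: "p x1 u x0 = x0" for x0 x1 by (metis t4b)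
  have g3_f44: "p x0 z x1 = x0" for x0 x1 by (metis t4a)
  have g3_f45: "p x0 x1 x0 = x0" for x0 x1 by (metis t2)
  have g3_f46: "p x0 x1 u = p x1 x0 u" for x0 x1 by (metis g3_f25)
  have g3_f47: "p z x0 x1 = p z x1 x0" for x0 x1 by (metis g3_f26)
  have g3_f48: "p x0 (p z x0 x1) u = x0" for x0 x1 by (metis g3_f27)
  have g3_f49: "p z x0 (p x0 x1 u) = x0" for x0 x1 by (metis g3_f28)
  have g3_f50: "p z (p z x0 x1) x2 = p z x0 (p z x1 x2)" for x0 x1 x2 by (metis g3_f29)
  have g3_f51: "p (p x0 x1 u) x2 u = p x0 (p x1 x2 u) u" for x0 x1 x2 by (metis g3_f30)
  have g3_f52: "p x0 (p z x1 x2) u = p z (p x0 x1 u) (p x0 x2 u)" for x0 x1 x2 by (metis g3_f31)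
  have g3_f53: "p z x0 (p x1 x2 u) = p (p z x0 x1) (p z x0 x2) u" for x0 x1 x2 by (metis g3_f32)
  have g3_f54: "p x0 (p x1 x2 x3) x4 = p (p x0 x1 x4) x2 (p x0 x3 x4)" for x0 x1 x2 x3 x4 by (metis g3_f33)
  have g3_f120: "p x0 x0 u = x0" for x0 by (metis g3_f48 g3_f39)
  have g3_f122: "p x2 (p z x3 x2) u = x2" for x2 x3 by (metis g3_f48 g3_f47)
  have g3_f149: "p z x4 x4 = x4" for x4 by (metis g3_f49 g3_f48)
  have g3_f150: "p z x6 (p x7 x6 u) = x6" for x6 x7 by (metis g3_f49 g3_f46)
  have g3_f166: "p x7 x8 u = p (p x7 x8 u) x7 u" for x7 x8 by (metis g3_f122 g3_f49)
  have g3_f193: "p z x4 x5 = p z (p z x4 x5) x4" for x4 x5 by (metis g3_f150 g3_f48)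
  have g3_f194: "p z x7 x6 = p z (p z x7 x6) x6" for x6 x7 by (metis g3_f150 g3_f122)
  have g3_f202: "p x2 x1 u = p (p x2 x1 u) x1 u" for x1 x2 by (metis g3_f122 g3_f150)
  have g3_f280: "p z x3 x4 = p z x4 (p z x3 x4)" for x3 x4 by (metis g3_f194 g3_f47)
  have g3_f311: "p x3 x4 u = p x4 (p x3 x4 u) u" for x3 x4 by (metis g3_f202 g3_f46)
  have g3_f392: "p z (p x6 x7 u) x6 = x6" for x6 x7 by (metis g3_f280 g3_f49)
  have g3_f393: "p z (p x9 x8 u) x8 = x8" for x8 x9 by (metis g3_f280 g3_f150)
  have g3_f511: "p (p z x8 x9) x8 u = x8" for x8 x9 by (metis g3_f311 g3_f48)
  have g3_f513: "p (p z x13 x12) x12 u = x12" for x12 x13 by (metis g3_f311 g3_f122)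
  have g3_f636: "p z x2 (p z x3 x4) = p z (p z x3 x2) x4" for x2 x3 x4 by (metis g3_f50 g3_f47)
  have g3_f639: "p z x10 (p z (p x10 x11 u) x12) = p z x10 x12" for x10 x11 x12 by (metis g3_f50 g3_f49)
  have g3_f643: "p z x22 (p z (p u x22 z) x23) = p z z x23" for x22 x23 by (metis g3_f50 g3_f42)
  have g3_f647: "p z x34 x36 = p z (p x34 x35 u) (p z x34 x36)" for x34 x35 x36 by (metis g3_f50 g3_f392)
  have g3_f660: "p z x0 x1 = p z x0 (p z x1 x0)" for x0 x1 by (metis g3_f50 g3_f193)
  have g3_f665: "p z x13 (p z x11 x12) = p z x11 (p z x12 x13)" for x11 x12 x13 by (metis g3_f50 g3_f47)
  have g3_f686: "p x19 (p z x17 (p z x18 x19)) u = x19" for x17 x18 x19 by (metis g3_f122 g3_f50)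
  have g3_f714: "z = p z x22 (p z (p u x22 z) x23)" for x22 x23 by (metis g3_f643 g3_f44)
  have g3_f770: "z = p z (p u x2 z) x2" for x2 by (metis g3_f714 g3_f280)
  have g3_f799: "p z (p u x4 z) (p z x4 x5) = p z z x5" for x4 x5 by (metis g3_f50 g3_f770)
  have g3_f816: "z = p z (p u x4 z) (p z x4 x5)" for x4 x5 by (metis g3_f799 g3_f44)
  have g3_f821: "p x3 (p z x4 (p z x3 x2)) u = x3" for x2 x3 x4 by (metis g3_f686 g3_f47)
  have g3_f824: "p x10 x11 u = p (p x10 x11 u) (p z x12 x10) u" for x10 x11 x12 by (metis g3_f686 g3_f49)
  have g3_f956: "p z (p z x13 x12) x12 = p z (p z x13 x12) (p z x12 x13)" for x12 x13 by (metis g3_f660 g3_f660)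
  have g3_f999: "p z x12 (p z x13 x12) = p z (p z x13 x12) (p z x12 x13)" for x12 x13 by (metis g3_f956 g3_f47)
  have g3_f1000: "p z x13 x12 = p z (p z x13 x12) (p z x12 x13)" for x12 x13 by (metis g3_f999 g3_f280)
  have g3_f1076: "p (p z x26 (p z x25 x27)) x25 u = x25" for x25 x26 x27 by (metis g3_f311 g3_f821)
  have g3_f1275: "p x52 x53 u = p (p z x54 x53) (p x52 x53 u) u" for x52 x53 x54 by (metis g3_f1076 g3_f393)
  have g3_f1443: "z = p z (p u (p x32 x33 u) z) x32" for x32 x33 by (metis g3_f816 g3_f392)
  have g3_f1444: "z = p z (p u (p x34 x35 u) z) x35" for x34 x35 by (metis g3_f816 g3_f393)
  have g3_f1613: "z = p z x2 (p u (p x2 x3 u) z)" for x2 x3 by (metis g3_f1443 g3_f47)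
  have g3_f1700: "z = p z x4 (p u (p x3 x4 u) z)" for x3 x4 by (metis g3_f1444 g3_f47)
  have g3_f2087: "p x27 (p (p u x27 z) x28 u) u = p u x28 u" for x27 x28 by (metis g3_f51 g3_f41)
  have g3_f2088: "p x29 (p (p z x29 x30) x31 u) u = p x29 x31 u" for x29 x30 x31 by (metis g3_f51 g3_f48)
  have g3_f2089: "p (p x33 x32 u) x34 u = p x32 (p (p x33 x32 u) x34 u) u" for x32 x33 x34 by (metis g3_f51 g3_f311)
  have g3_f2090: "p x35 (p (p z x36 x35) x37 u) u = p x35 x37 u" for x35 x36 x37 by (metis g3_f51 g3_f122)
  have g3_f2094: "p x49 (p x50 x51 u) u = p (p x50 x49 u) x51 u" for x49 x50 x51 by (metis g3_f51 g3_f46)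
  have g3_f2107: "p x0 x1 u = p x0 (p x1 x0 u) u" for x0 x1 by (metis g3_f51 g3_f166)
  have g3_f2111: "u = p x9 (p x10 (p u (p x9 x10 u) z) u) u" for x10 x9 by (metis g3_f51 g3_f41)
  have g3_f2118: "p x33 (p x31 x32 u) u = p x31 (p x32 x33 u) u" for x31 x32 x33 by (metis g3_f51 g3_f46)
  have g3_f2137: "p z x39 (p x37 (p x38 x39 u) u) = x39" for x37 x38 x39 by (metis g3_f150 g3_f51)
  have g3_f2167: "u = p x27 (p (p u x27 z) x28 u) u" for x27 x28 by (metis g3_f2087 g3_f45)
  have g3_f2168: "p x33 (p x32 x34 u) u = p x32 (p x33 (p x32 x34 u) u) u" for x32 x33 x34 by (metis g3_f2089 g3_f51)
  have g3_f2191: "u = p x3 (p x4 (p u x3 z) u) u" for x3 x4 by (metis g3_f2167 g3_f311)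
  have g3_f2205: "u = p (p u x3 z) x3 u" for x3 by (metis g3_f2167 g3_f311)
  have g3_f2280: "p u x5 u = p (p u x4 z) (p x4 x5 u) u" for x4 x5 by (metis g3_f51 g3_f2205)
  have g3_f2293: "u = p (p u x4 z) (p x4 x5 u) u" for x4 x5 by (metis g3_f2280 g3_f45)
  have g3_f2320: "p z x53 (p x54 (p x53 x52 u) u) = x53" for x52 x53 x54 by (metis g3_f2137 g3_f46)
  have g3_f2435: "p (p x17 x16 u) x16 u = p (p x17 x16 u) (p x16 x17 u) u" for x16 x17 by (metis g3_f2107 g3_f2107)
  have g3_f2438: "p (p (p u x30 z) x31 u) x30 u = p (p (p u x30 z) x31 u) u u" for x30 x31 by (metis g3_f2107 g3_f2167)
  have g3_f2443: "p x46 (p x44 x45 u) u = p x46 (p x44 (p x45 x46 u) u) u" for x44 x45 x46 by (metis g3_f2107 g3_f51)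
  have g3_f2475: "z = p z (p u (p x32 x33 u) z) (p x33 x32 u)" for x32 x33 by (metis g3_f1444 g3_f2107)
  have g3_f2517: "p x16 (p x17 x16 u) u = p (p x17 x16 u) (p x16 x17 u) u" for x16 x17 by (metis g3_f2435 g3_f46)
  have g3_f2518: "p x17 x16 u = p (p x17 x16 u) (p x16 x17 u) u" for x16 x17 by (metis g3_f2517 g3_f311)
  have g3_f2521: "u = p (p (p u x30 z) x31 u) x30 u" for x30 x31 by (metis g3_f2438 g3_f43)
  have g3_f2626: "p z (p x40 (p x39 x41 u) u) x39 = x39" for x39 x40 x41 by (metis g3_f280 g3_f2320)
  have g3_f2697: "p (p x38 (p u x37 z) u) x37 u = p (p x38 (p u x37 z) u) u u" for x37 x38 by (metis g3_f2107 g3_f2191)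
  have g3_f2739: "u = p (p x38 (p u x37 z) u) x37 u" for x37 x38 by (metis g3_f2697 g3_f43)
  have g3_f2855: "p z x88 x89 = p z (p x90 x89 u) (p z x88 x89)" for x88 x89 x90 by (metis g3_f2626 g3_f513)
  have g3_f3183: "u = p (p u (p z x53 x54) z) x53 u" for x53 x54 by (metis g3_f2293 g3_f511)
  have g3_f3184: "u = p (p u (p z x55 x56) z) x56 u" for x55 x56 by (metis g3_f2293 g3_f513)
  have g3_f3259: "u = p (p x16 (p x17 (p u x18 z) u) u) x18 u" for x16 x17 x18 by (metis g3_f2739 g3_f51)
  have g3_f3587: "u = p x4 (p u (p z x3 x4) z) u" for x3 x4 by (metis g3_f3184 g3_f46)
  have g3_f4559: "p z x21 x23 = p z x21 (p z x23 (p x21 x22 u))" for x21 x22 x23 by (metis g3_f639 g3_f47)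
  have g3_f4685: "p z x1 x0 = p z x0 (p z x0 x1)" for x0 x1 by (metis g3_f665 g3_f149)
  have g3_f4721: "p z x114 x113 = p z u (p z x113 x114)" for x113 x114 by (metis g3_f665 g3_f43)
  have g3_f4770: "p z x12 x10 = p z (p x10 x11 u) (p z x12 x10)" for x10 x11 x12 by (metis g3_f665 g3_f49)
  have g3_f5322: "p z (p z x16 x17) x16 = p z u (p z x17 x16)" for x16 x17 by (metis g3_f4721 g3_f4685)
  have g3_f5423: "p z x17 x16 = p z (p z x16 x17) x16" for x16 x17 by (metis g3_f5322 g3_f43)
  have g3_f5512: "p z (p z x81 x82) u = p z (p z x82 x81) u" for x81 x82 by (metis g3_f5423 g3_f4721)
  have g3_f5642: "p z x82 x81 = p z (p z x81 x82) u" for x81 x82 by (metis g3_f5512 g3_f39)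
  have g3_f6675: "p x7 (p x8 x9 u) u = p x8 (p x7 x9 u) u" for x7 x8 x9 by (metis g3_f2094 g3_f51)
  have g3_f6682: "u = p x21 (p x20 (p u (p x20 x21 u) z) u) u" for x20 x21 by (metis g3_f2094 g3_f41)
  have g3_f6684: "p (p x25 x26 u) x27 u = p x26 (p x25 (p x27 (p x25 x26 u) u) u) u" for x25 x26 x27 by (metis g3_f2094 g3_f2107)
  have g3_f6825: "p (p x25 x26 u) x27 u = p x26 (p x27 (p x25 x26 u) u) u" for x25 x26 x27 by (metis g3_f6684 g3_f2168)
  have g3_f6826: "p (p x25 x26 u) x27 u = p x26 (p x27 x25 u) u" for x25 x26 x27 by (metis g3_f6825 g3_f2443)
  have g3_f6950: "p (p x50 (p u (p x49 x50 u) z) u) x49 u = p (p x50 (p u (p x49 x50 u) z) u) u u" for x49 x50 by (metis g3_f2107 g3_f2111)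
  have g3_f7062: "u = p (p x50 (p u (p x49 x50 u) z) u) x49 u" for x49 x50 by (metis g3_f6950 g3_f43)
  have g3_f7098: "p x1 x0 u = p z (p x0 x1 u) u" for x0 x1 by (metis g3_f2118 g3_f39)
  have g3_f7107: "p x20 (p z x19 (p z x18 u)) u = p z (p (p z x18 x19) x20 u) u" for x18 x19 x20 by (metis g3_f2118 g3_f636)
  have g3_f7224: "p x74 (p x71 x73 u) u = p (p (p z x71 x72) x73 u) (p x74 x71 u) u" for x71 x72 x73 x74 by (metis g3_f2118 g3_f2088)
  have g3_f7443: "p z (p x142 x143 u) (p z u x144) = p z (p x143 (p z x142 u) u) x144" for x142 x143 x144 by (metis g3_f50 g3_f2118)
  have g3_f7486: "u = p (p x254 (p (p u x252 z) x253 u) u) x252 u" for x252 x253 x254 by (metis g3_f2521 g3_f2118)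
  have g3_f7494: "p (p z x18 x19) x20 u = p x20 (p z x19 (p z x18 u)) u" for x18 x19 x20 by (metis g3_f7107 g3_f39)
  have g3_f7495: "p (p z x18 x19) x20 u = p x20 (p z x19 x18) u" for x18 x19 x20 by (metis g3_f7494 g3_f39)
  have g3_f7756: "p z (p x142 x143 u) (p z u x144) = p z (p x143 x142 u) x144" for x142 x143 x144 by (metis g3_f7443 g3_f39)
  have g3_f7757: "p z (p x142 x143 u) x144 = p z (p x143 x142 u) x144" for x142 x143 x144 by (metis g3_f7756 g3_f43)
  have g3_f7968: "p (p x153 x154 u) (p x155 z u) u = p x155 (p x154 x153 u) u" for x153 x154 x155 by (metis g3_f2118 g3_f7098)
  have g3_f8072: "p x155 (p x154 x153 u) u = p (p x153 x154 u) x155 u" for x153 x154 x155 by (metis g3_f7968 g3_f44)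
  have g3_f9767: "p (p (p z x93 x92) x94 u) (p x95 x92 u) u = p x95 (p x92 x94 u) u" for x92 x93 x94 x95 by (metis g3_f2118 g3_f2090)
  have g3_f11597: "p z x90 (p z x87 x88) = p z (p z x88 (p x87 x89 u)) (p z x90 x87)" for x87 x88 x89 x90 by (metis g3_f665 g3_f4559)
  have g3_f13018: "p x20 (p z x19 (p z x18 u)) u = p z (p x20 (p z x18 x19) u) u" for x18 x19 x20 by (metis g3_f6675 g3_f636)
  have g3_f13089: "p x47 (p x48 x46 u) u = p x47 (p x46 x48 u) u" for x46 x47 x48 by (metis g3_f6675 g3_f2118)
  have g3_f13473: "p x20 (p z x19 (p z x18 u)) u = p x20 (p z x18 x19) u" for x18 x19 x20 by (metis g3_f13018 g3_f39)
  have g3_f13474: "p x20 (p z x19 x18) u = p x20 (p z x18 x19) u" for x18 x19 x20 by (metis g3_f13473 g3_f39)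
  have g3_f13856: "u = p (p x73 (p u (p x73 x72 u) z) u) (p x72 (p u u z) u) u" for x72 x73 by (metis g3_f6682 g3_f6682)
  have g3_f14035: "u = p (p x73 (p u (p x73 x72 u) z) u) (p x72 z u) u" for x72 x73 by (metis g3_f13856 g3_f43)
  have g3_f14036: "u = p (p x73 (p u (p x73 x72 u) z) u) x72 u" for x72 x73 by (metis g3_f14035 g3_f44)
  have g3_f24123: "p x23 x24 u = p (p z x25 x23) (p x24 x23 u) u" for x23 x24 x25 by (metis g3_f8072 g3_f824)
  have g3_f32559: "p x261 (p x260 (p z x258 x259) u) u = p x261 (p x260 (p z x259 x258) u) u" for x258 x259 x260 x261 by (metis g3_f13089 g3_f7495)
  have g3_f144799: "p x124 (p z (p u x124 z) x125) u = p z u (p x124 x125 u)" for x124 x125 by (metis g3_f52 g3_f41)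
  have g3_f144883: "p (p x426 (p u (p x426 x427 u) z) u) (p z x427 x428) u = p z u (p (p x426 (p u (p x426 x427 u) z) u) x428 u)" for x426 x427 x428 by (metis g3_f52 g3_f14036)
  have g3_f144888: "p (p x444 (p (p u x445 z) x446 u) u) (p z x445 x447) u = p z u (p (p x444 (p (p u x445 z) x446 u) u) x447 u)" for x444 x445 x446 x447 by (metis g3_f52 g3_f7486)
  have g3_f144892: "p (p x460 (p x461 (p u x462 z) u) u) (p z x462 x463) u = p z u (p (p x460 (p x461 (p u x462 z) u) u) x463 u)" for x460 x461 x462 x463 by (metis g3_f52 g3_f3259)
  have g3_f144989: "p x124 (p z x125 (p u x124 z)) u = p z (p x124 x125 u) u" for x124 x125 by (metis g3_f52 g3_f41)
  have g3_f145572: "p x124 x125 u = p x124 (p z (p u x124 z) x125) u" for x124 x125 by (metis g3_f144799 g3_f43)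
  have g3_f145697: "p (p x426 (p u (p x426 x427 u) z) u) (p z x427 x428) u = p (p x426 (p u (p x426 x427 u) z) u) x428 u" for x426 x427 x428 by (metis g3_f144883 g3_f43)
  have g3_f145698: "p (p x426 (p u (p x426 x427 u) z) u) (p z x427 x428) u = p x426 (p (p u (p x426 x427 u) z) x428 u) u" for x426 x427 x428 by (metis g3_f145697 g3_f51)
  have g3_f145707: "p (p x444 (p (p u x445 z) x446 u) u) (p z x445 x447) u = p (p x444 (p (p u x445 z) x446 u) u) x447 u" for x444 x445 x446 x447 by (metis g3_f144888 g3_f43)
  have g3_f145708: "p (p x444 (p (p u x445 z) x446 u) u) (p z x445 x447) u = p x444 (p (p (p u x445 z) x446 u) x447 u) u" for x444 x445 x446 x447 by (metis g3_f145707 g3_f51)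
  have g3_f145709: "p (p x444 (p (p u x445 z) x446 u) u) (p z x445 x447) u = p x444 (p (p u x445 z) (p x446 x447 u) u) u" for x444 x445 x446 x447 by (metis g3_f145708 g3_f51)
  have g3_f145716: "p (p x460 (p x461 (p u x462 z) u) u) (p z x462 x463) u = p (p x460 (p x461 (p u x462 z) u) u) x463 u" for x460 x461 x462 x463 by (metis g3_f144892 g3_f43)
  have g3_f145717: "p (p x460 (p x461 (p u x462 z) u) u) (p z x462 x463) u = p x460 (p (p x461 (p u x462 z) u) x463 u) u" for x460 x461 x462 x463 by (metis g3_f145716 g3_f51)
  have g3_f145718: "p (p x460 (p x461 (p u x462 z) u) u) (p z x462 x463) u = p x460 (p x461 (p (p u x462 z) x463 u) u) u" for x460 x461 x462 x463 by (metis g3_f145717 g3_f51)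
  have g3_f145857: "p x124 x125 u = p x124 (p z x125 (p u x124 z)) u" for x124 x125 by (metis g3_f144989 g3_f39)
  have g3_f146369: "p x155 z u = p x155 (p u (p u x155 z) z) u" for x155 by (metis g3_f145572 g3_f42)
  have g3_f146370: "p x156 z u = p x156 (p u (p (p u x156 z) x157 u) z) u" for x156 x157 by (metis g3_f145572 g3_f1613)
  have g3_f146499: "p (p z (p u x144 z) x145) x144 u = p (p z (p u x144 z) x145) (p x144 x145 u) u" for x144 x145 by (metis g3_f2107 g3_f145572)
  have g3_f146522: "p (p z (p u x201 z) x202) x201 u = p (p (p z (p u x201 z) x202) x201 u) (p x201 x202 u) u" for x201 x202 by (metis g3_f2518 g3_f145572)
  have g3_f146902: "p x155 (p u (p u x155 z) z) u = x155" for x155 by (metis g3_f146369 g3_f44)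
  have g3_f146903: "p x156 (p u (p (p u x156 z) x157 u) z) u = x156" for x156 x157 by (metis g3_f146370 g3_f44)
  have g3_f146984: "p x144 x145 u = p (p z (p u x144 z) x145) x144 u" for x144 x145 by (metis g3_f146499 g3_f1275)
  have g3_f146995: "p (p z (p u x201 z) x202) x201 u = p x201 (p x202 x201 u) u" for x201 x202 by (metis g3_f146522 g3_f9767)
  have g3_f146996: "p x202 x201 u = p (p z (p u x201 z) x202) x201 u" for x201 x202 by (metis g3_f146995 g3_f311)
  have g3_f147368: "p u (p u x29 z) z = p z x29 (p u (p u x29 z) z)" for x29 by (metis g3_f393 g3_f146902)
  have g3_f148351: "p (p z x161 (p u x160 z)) x160 u = p (p (p z x161 (p u x160 z)) x160 u) (p x160 x161 u) u" for x160 x161 by (metis g3_f2518 g3_f145857)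
  have g3_f148758: "p (p z x161 (p u x160 z)) x160 u = p x160 (p x161 x160 u) u" for x160 x161 by (metis g3_f148351 g3_f7224)
  have g3_f148759: "p x161 x160 u = p (p z x161 (p u x160 z)) x160 u" for x160 x161 by (metis g3_f148758 g3_f311)
  have g3_f160570: "p x109 x107 u = p (p u (p (p u x107 z) x108 u) z) (p x109 x107 u) u" for x107 x108 x109 by (metis g3_f2118 g3_f146903)
  have g3_f160632: "p x279 x277 u = p x277 (p x279 (p u (p (p u x277 z) x278 u) z) u) u" for x277 x278 x279 by (metis g3_f6675 g3_f146903)
  have g3_f162881: "p z (p z x162 x163) u = p z x162 (p (p u x162 z) x163 u)" for x162 x163 by (metis g3_f53 g3_f42)
  have g3_f163087: "p (p z x162 x163) z u = p z x162 (p x163 (p u x162 z) u)" for x162 x163 by (metis g3_f53 g3_f42)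
  have g3_f163632: "p z x162 x163 = p z x162 (p (p u x162 z) x163 u)" for x162 x163 by (metis g3_f162881 g3_f39)
  have g3_f163977: "p z x162 x163 = p z x162 (p x163 (p u x162 z) u)" for x162 x163 by (metis g3_f163087 g3_f44)
  have g3_f164591: "p z x47 u = p z x47 (p u (p u x47 z) z)" for x47 by (metis g3_f163632 g3_f41)
  have g3_f164629: "p z x151 u = p z x151 (p u (p z x152 (p u x151 z)) z)" for x151 x152 by (metis g3_f163632 g3_f3587)
  have g3_f164636: "p z x170 u = p z x170 (p x171 (p u (p (p u x170 z) x171 u) z) u)" for x170 x171 by (metis g3_f163632 g3_f2111)
  have g3_f164698: "p z (p (p u x71 z) x72 u) x71 = p z (p (p u x71 z) x72 u) (p z x71 x72)" for x71 x72 by (metis g3_f660 g3_f163632)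
  have g3_f164901: "p z x47 (p u (p u x47 z) z) = x47" for x47 by (metis g3_f164591 g3_f39)
  have g3_f164902: "p u (p u x29 z) z = x29" for x29 by (metis g3_f147368 g3_f164901)
  have g3_f165362: "p z x151 (p u (p z x152 (p u x151 z)) z) = x151" for x151 x152 by (metis g3_f164629 g3_f39)
  have g3_f165371: "p z x170 (p x171 (p u (p (p u x170 z) x171 u) z) u) = x170" for x170 x171 by (metis g3_f164636 g3_f39)
  have g3_f165407: "p z x71 x72 = p z (p (p u x71 z) x72 u) x71" for x71 x72 by (metis g3_f164698 g3_f2855)
  have g3_f165563: "p (p u x140 z) x141 u = p (p z x140 x141) (p u x140 z) u" for x140 x141 by (metis g3_f146984 g3_f164902)
  have g3_f165564: "p x143 (p u x142 z) u = p (p z x142 x143) (p u x142 z) u" for x142 x143 by (metis g3_f146996 g3_f164902)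
  have g3_f165726: "p z (p x95 (p u x94 z) u) x94 = p z (p x95 (p u x94 z) u) (p z x94 x95)" for x94 x95 by (metis g3_f660 g3_f163977)
  have g3_f166049: "p z x94 x95 = p z (p x95 (p u x94 z) u) x94" for x94 x95 by (metis g3_f165726 g3_f4770)
  have g3_f167343: "p z (p u x0 z) x1 = p z (p x1 x0 u) (p u x0 z)" for x0 x1 by (metis g3_f166049 g3_f164902)
  have g3_f167552: "p z x133 (p x132 (p u x133 z) u) = p z (p z x133 (p x132 (p u x133 z) u)) (p z x133 x132)" for x132 x133 by (metis g3_f1000 g3_f166049)
  have g3_f168116: "p z x133 (p x132 (p u x133 z) u) = p z x133 (p z x132 x133)" for x132 x133 by (metis g3_f167552 g3_f11597)
  have g3_f168117: "p z x132 x133 = p z x133 (p x132 (p u x133 z) u)" for x132 x133 by (metis g3_f168116 g3_f280)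
  have g3_f168747: "p z x150 u = p z (p u (p z x149 (p u x150 z)) z) x150" for x149 x150 by (metis g3_f168117 g3_f3184)
  have g3_f168848: "p z (p x97 (p u x96 z) u) x96 = p z (p x97 (p u x96 z) u) (p z x97 x96)" for x96 x97 by (metis g3_f660 g3_f168117)
  have g3_f169094: "p z (p u (p z x149 (p u x150 z)) z) x150 = x150" for x149 x150 by (metis g3_f168747 g3_f39)
  have g3_f169167: "p z x97 x96 = p z (p x97 (p u x96 z) u) x96" for x96 x97 by (metis g3_f168848 g3_f647)
  have g3_f169728: "p z x1 (p u x0 z) = p z (p x1 x0 u) (p u x0 z)" for x0 x1 by (metis g3_f169167 g3_f164902)
  have g3_f171725: "p u (p z x37 (p u x38 z)) z = p (p u (p z x37 (p u x38 z)) z) x38 u" for x37 x38 by (metis g3_f48 g3_f169094)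
  have g3_f174237: "p x0 (p u x2 x3) x1 = p x1 x2 (p x0 x3 x1)" for x0 x1 x2 x3 by (metis g3_f54 g3_f43)
  have g3_f174238: "p x4 (p z x6 x7) x5 = p x4 x6 (p x4 x7 x5)" for x4 x5 x6 x7 by (metis g3_f54 g3_f44)
  have g3_f174293: "p x257 (p x257 x258 x259) u = p x257 x258 (p x257 x259 u)" for x257 x258 x259 by (metis g3_f54 g3_f120)
  have g3_f174294: "p z (p x260 x261 x262) x260 = p x260 x261 (p z x262 x260)" for x260 x261 x262 by (metis g3_f54 g3_f149)
  have g3_f174451: "p u (p (p u x985 z) x986 x987) z = p x985 x986 (p u x987 z)" for x985 x986 x987 by (metis g3_f54 g3_f164902)
  have g3_f174553: "p x0 (p x2 x3 u) x1 = p (p x0 x2 x1) x3 x1" for x0 x1 x2 x3 by (metis g3_f54 g3_f43)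
  have g3_f174554: "p x4 (p x6 x7 z) x5 = p (p x4 x6 x5) x7 x4" for x4 x5 x6 x7 by (metis g3_f54 g3_f44)
  have g3_f174558: "p x19 (p x21 x22 (p x20 x19 u)) u = p (p x19 x21 u) x22 (p x19 x20 u)" for x19 x20 x21 x22 by (metis g3_f54 g3_f2107)
  have g3_f174930: "u = p (p u x53 (p u x54 z)) x53 u" for x53 x54 by (metis g3_f3183 g3_f174238)
  have g3_f175570: "p z x151 (p u x152 (p u (p u x151 z) z)) = x151" for x151 x152 by (metis g3_f165362 g3_f174238)
  have g3_f175575: "p u x37 (p u (p u x38 z) z) = p (p u x37 (p u (p u x38 z) z)) x38 u" for x37 x38 by (metis g3_f171725 g3_f174238)
  have g3_f176040: "p z x151 (p u x152 (p z x151 (p u z z))) = x151" for x151 x152 by (metis g3_f175570 g3_f174237)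
  have g3_f176041: "p z x151 (p u x152 (p z x151 u)) = x151" for x151 x152 by (metis g3_f176040 g3_f44)
  have g3_f176042: "p z x151 (p z (p u x152 x151) u) = x151" for x151 x152 by (metis g3_f176041 g3_f174237)
  have g3_f176043: "p z x151 (p u x152 x151) = x151" for x151 x152 by (metis g3_f176042 g3_f39)
  have g3_f176062: "p u x37 (p z x38 (p u z z)) = p (p u x37 (p z x38 (p u z z))) x38 u" for x37 x38 by (metis g3_f175575 g3_f174237)
  have g3_f176063: "p u x37 (p z x38 u) = p (p u x37 (p z x38 u)) x38 u" for x37 x38 by (metis g3_f176062 g3_f44)
  have g3_f176064: "p z (p u x37 x38) u = p (p z (p u x37 x38) u) x38 u" for x37 x38 by (metis g3_f176063 g3_f174237)
  have g3_f176065: "p u x37 x38 = p (p u x37 x38) x38 u" for x37 x38 by (metis g3_f176064 g3_f39)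
  have g3_f176384: "p x156 (p x156 x157 (p u u z)) u = x156" for x156 x157 by (metis g3_f146903 g3_f174451)
  have g3_f176394: "p x109 x107 u = p (p x107 x108 (p u u z)) (p x109 x107 u) u" for x107 x108 x109 by (metis g3_f160570 g3_f174451)
  have g3_f176408: "p x279 x277 u = p x277 (p x279 (p x277 x278 (p u u z)) u) u" for x277 x278 x279 by (metis g3_f160632 g3_f174451)
  have g3_f176422: "p z x170 (p x171 (p x170 x171 (p u u z)) u) = x170" for x170 x171 by (metis g3_f165371 g3_f174451)
  have g3_f176433: "p x156 (p x156 x157 z) u = x156" for x156 x157 by (metis g3_f176384 g3_f43)
  have g3_f176443: "p x109 x107 u = p (p x107 x108 z) (p x109 x107 u) u" for x107 x108 x109 by (metis g3_f176394 g3_f43)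
  have g3_f176457: "p x279 x277 u = p x277 (p x279 (p x277 x278 z) u) u" for x277 x278 x279 by (metis g3_f176408 g3_f43)
  have g3_f176471: "p z x170 (p x171 (p x170 x171 z) u) = x170" for x170 x171 by (metis g3_f176422 g3_f43)
  have g3_f176598: "u = p x27 (p u (p x27 x28 z) z) u" for x27 x28 by (metis g3_f2167 g3_f174554)
  have g3_f176625: "p x444 (p (p u x445 z) (p x446 x447 u) u) u = p (p x444 (p u (p x445 x446 z) z) u) (p z x445 x447) u" for x444 x445 x446 x447 by (metis g3_f145709 g3_f174554)
  have g3_f176626: "p (p x460 (p x461 (p u x462 z) u) u) (p z x462 x463) u = p x460 (p x461 (p u (p x462 x463 z) z) u) u" for x460 x461 x462 x463 by (metis g3_f145718 g3_f174554)
  have g3_f176658: "p z x162 x163 = p z x162 (p u (p x162 x163 z) z)" for x162 x163 by (metis g3_f163632 g3_f174554)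
  have g3_f176671: "p z x71 x72 = p z (p u (p x71 x72 z) z) x71" for x71 x72 by (metis g3_f165407 g3_f174554)
  have g3_f176674: "p (p z x140 x141) (p u x140 z) u = p u (p x140 x141 z) z" for x140 x141 by (metis g3_f165563 g3_f174554)
  have g3_f176741: "p (p x426 (p u (p x426 x427 u) z) u) (p z x427 x428) u = p x426 (p u (p (p x426 x427 u) x428 z) z) u" for x426 x427 x428 by (metis g3_f145698 g3_f174554)
  have g3_f176949: "p (p x444 (p u (p x445 x446 z) z) u) (p z x445 x447) u = p x444 (p u (p x445 (p x446 x447 u) z) z) u" for x444 x445 x446 x447 by (metis g3_f176625 g3_f174554)
  have g3_f177012: "p x19 (p x21 x22 (p x20 x19 u)) u = p x19 (p x21 x22 x20) u" for x19 x20 x21 x22 by (metis g3_f174558 g3_f54)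
  have g3_f177618: "p (p u x362 x361) x363 u = p x361 (p x363 (p u x362 x361) u) u" for x361 x362 x363 by (metis g3_f24123 g3_f176043)
  have g3_f177719: "p x361 (p x363 (p u x362 x361) u) u = p u (p x362 x363 z) x361" for x361 x362 x363 by (metis g3_f177618 g3_f174554)
  have g3_f177860: "z = p z (p u x89 z) (p x89 x90 z)" for x89 x90 by (metis g3_f1444 g3_f176433)
  have g3_f177863: "z = p z (p x96 x97 z) (p u x96 z)" for x96 x97 by (metis g3_f1700 g3_f176433)
  have g3_f179536: "z = p z (p u (p (p u (p x162 x163 z) z) x162 u) z) u" for x162 x163 by (metis g3_f2475 g3_f176598)
  have g3_f179847: "z = p z (p (p x162 x163 z) x162 (p u u z)) u" for x162 x163 by (metis g3_f179536 g3_f174451)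
  have g3_f179848: "z = p z (p (p x162 x163 z) x162 z) u" for x162 x163 by (metis g3_f179847 g3_f43)
  have g3_f179849: "z = p z (p x162 (p x163 x162 u) z) u" for x162 x163 by (metis g3_f179848 g3_f174553)
  have g3_f180341: "p x73 (p x72 x73 z) u = p x72 (p x73 (p x72 x73 z) u) u" for x72 x73 by (metis g3_f513 g3_f176471)
  have g3_f180560: "p x73 x72 u = p x73 (p x72 x73 z) u" for x72 x73 by (metis g3_f180341 g3_f176457)
  have g3_f182085: "p (p x111 x110 z) x110 u = p (p x111 x110 z) (p x110 x111 u) u" for x110 x111 by (metis g3_f2107 g3_f180560)
  have g3_f182438: "p x110 x111 u = p (p x111 x110 z) x110 u" for x110 x111 by (metis g3_f182085 g3_f176443)
  have g3_f182684: "u = p (p u x1 x0) x1 u" for x0 x1 by (metis g3_f174930 g3_f164902)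
  have g3_f183231: "p (p u x186 x187) (p z x186 x188) u = p z u (p (p u x186 x187) x188 u)" for x186 x187 x188 by (metis g3_f52 g3_f182684)
  have g3_f183490: "p (p u x186 x187) (p z x186 x188) u = p (p u x186 x187) x188 u" for x186 x187 x188 by (metis g3_f183231 g3_f43)
  have g3_f183491: "p (p u x186 x187) (p z x186 x188) u = p u (p x186 x188 z) x187" for x186 x187 x188 by (metis g3_f183490 g3_f174554)
  have g3_f187815: "u = p u x2 x2" for x2 by (metis g3_f176065 g3_f182684)
  have g3_f187833: "p u x25 (p x26 x27 u) = p x26 (p x27 (p u x25 (p x26 x27 u)) u) u" for x25 x26 x27 by (metis g3_f176065 g3_f2118)
  have g3_f187998: "p (p u x419 x420) x421 u = p x420 (p x421 (p u x419 x420) u) u" for x419 x420 x421 by (metis g3_f6826 g3_f176065)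
  have g3_f188069: "p u x25 (p x26 x27 u) = p x26 (p x27 (p u x25 x26) u) u" for x25 x26 x27 by (metis g3_f187833 g3_f177012)
  have g3_f188070: "p u (p x362 x363 z) x361 = p u x362 (p x361 x363 u)" for x361 x362 x363 by (metis g3_f177719 g3_f188069)
  have g3_f188080: "p (p u x186 x187) (p z x186 x188) u = p u x186 (p x187 x188 u)" for x186 x187 x188 by (metis g3_f183491 g3_f188070)
  have g3_f188120: "p (p x460 (p x461 (p u x462 z) u) u) (p z x462 x463) u = p x460 (p x461 (p u x462 (p z x463 u)) u) u" for x460 x461 x462 x463 by (metis g3_f176626 g3_f188070)
  have g3_f188143: "p z x162 x163 = p z x162 (p u x162 (p z x163 u))" for x162 x163 by (metis g3_f176658 g3_f188070)
  have g3_f188156: "p z x71 x72 = p z (p u x71 (p z x72 u)) x71" for x71 x72 by (metis g3_f176671 g3_f188070)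
  have g3_f188159: "p (p z x140 x141) (p u x140 z) u = p u x140 (p z x141 u)" for x140 x141 by (metis g3_f176674 g3_f188070)
  have g3_f188203: "p x444 (p u (p x445 (p x446 x447 u) z) z) u = p (p x444 (p u x445 (p z x446 u)) u) (p z x445 x447) u" for x444 x445 x446 x447 by (metis g3_f176949 g3_f188070)
  have g3_f188265: "p (p x426 (p u (p x426 x427 u) z) u) (p z x427 x428) u = p x426 (p u (p x426 x427 u) (p z x428 u)) u" for x426 x427 x428 by (metis g3_f176741 g3_f188070)
  have g3_f188535: "p (p x460 (p x461 (p u x462 z) u) u) (p z x462 x463) u = p x460 (p x461 (p z (p u x462 x463) u) u) u" for x460 x461 x462 x463 by (metis g3_f188120 g3_f174237)
  have g3_f188536: "p (p x460 (p x461 (p u x462 z) u) u) (p z x462 x463) u = p x460 (p x461 (p z u (p u x462 x463)) u) u" for x460 x461 x462 x463 by (metis g3_f188535 g3_f32559)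
  have g3_f188537: "p (p x460 (p x461 (p u x462 z) u) u) (p z x462 x463) u = p x460 (p x461 (p u x462 x463) u) u" for x460 x461 x462 x463 by (metis g3_f188536 g3_f43)
  have g3_f188588: "p z x162 x163 = p z x162 (p z (p u x162 x163) u)" for x162 x163 by (metis g3_f188143 g3_f174237)
  have g3_f188589: "p z x162 x163 = p z x162 (p u x162 x163)" for x162 x163 by (metis g3_f188588 g3_f39)
  have g3_f188680: "p z x71 x72 = p z (p z (p u x71 x72) u) x71" for x71 x72 by (metis g3_f188156 g3_f174237)
  have g3_f188681: "p z x71 x72 = p z (p u x71 x72) x71" for x71 x72 by (metis g3_f188680 g3_f39)
  have g3_f188687: "p (p z x140 x141) (p u x140 z) u = p z (p u x140 x141) u" for x140 x141 by (metis g3_f188159 g3_f174237)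
  have g3_f188688: "p (p z x140 x141) (p u x140 z) u = p u x140 x141" for x140 x141 by (metis g3_f188687 g3_f39)
  have g3_f188689: "p x143 (p u x142 z) u = p u x142 x143" for x142 x143 by (metis g3_f165564 g3_f188688)
  have g3_f188772: "p z x132 x133 = p z x133 (p u x133 x132)" for x132 x133 by (metis g3_f168117 g3_f188689)
  have g3_f188780: "p z x97 x96 = p z (p u x96 x97) x96" for x96 x97 by (metis g3_f169167 g3_f188689)
  have g3_f188810: "p x460 (p x461 (p u x462 x463) u) u = p (p x460 (p u x462 x461) u) (p z x462 x463) u" for x460 x461 x462 x463 by (metis g3_f188537 g3_f188689)
  have g3_f188851: "u = p (p u (p x49 x50 u) x50) x49 u" for x49 x50 by (metis g3_f7062 g3_f188689)
  have g3_f189126: "p x444 (p u (p x445 (p x446 x447 u) z) z) u = p (p x444 (p z (p u x445 x446) u) u) (p z x445 x447) u" for x444 x445 x446 x447 by (metis g3_f188203 g3_f174237)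
  have g3_f189127: "p x444 (p u (p x445 (p x446 x447 u) z) z) u = p (p x444 (p z u (p u x445 x446)) u) (p z x445 x447) u" for x444 x445 x446 x447 by (metis g3_f189126 g3_f13474)
  have g3_f189128: "p x444 (p u (p x445 (p x446 x447 u) z) z) u = p (p x444 (p u x445 x446) u) (p z x445 x447) u" for x444 x445 x446 x447 by (metis g3_f189127 g3_f43)
  have g3_f189129: "p x444 (p u (p x445 (p x446 x447 u) z) z) u = p x444 (p x446 (p u x445 x447) u) u" for x444 x445 x446 x447 by (metis g3_f189128 g3_f188810)
  have g3_f189130: "p x444 (p x446 (p u x445 x447) u) u = p x444 (p u x445 (p z (p x446 x447 u) u)) u" for x444 x445 x446 x447 by (metis g3_f189129 g3_f188070)
  have g3_f189131: "p x444 (p x446 (p u x445 x447) u) u = p x444 (p z (p u x445 (p x446 x447 u)) u) u" for x444 x445 x446 x447 by (metis g3_f189130 g3_f174237)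
  have g3_f189132: "p x444 (p x446 (p u x445 x447) u) u = p x444 (p u x445 (p x446 x447 u)) u" for x444 x445 x446 x447 by (metis g3_f189131 g3_f39)
  have g3_f189266: "p (p x426 (p u (p x426 x427 u) z) u) (p z x427 x428) u = p x426 (p z (p u (p x426 x427 u) x428) u) u" for x426 x427 x428 by (metis g3_f188265 g3_f189132)
  have g3_f189267: "p (p x426 (p u (p x426 x427 u) z) u) (p z x427 x428) u = p x426 (p z u (p u (p x426 x427 u) x428)) u" for x426 x427 x428 by (metis g3_f189266 g3_f13474)
  have g3_f189268: "p (p x426 (p u (p x426 x427 u) z) u) (p z x427 x428) u = p x426 (p u (p x426 x427 u) x428) u" for x426 x427 x428 by (metis g3_f189267 g3_f43)
  have g3_f189269: "p x426 (p u (p x426 x427 u) x428) u = p (p u (p x426 x427 u) x426) (p z x427 x428) u" for x426 x427 x428 by (metis g3_f189268 g3_f188689)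
  have g3_f189977: "p (p u x419 x420) x421 u = p u x419 (p x420 x421 u)" for x419 x420 x421 by (metis g3_f187998 g3_f188069)
  have g3_f190062: "p u (p x62 x63 x61) x61 = p (p u x62 x61) x63 u" for x61 x62 x63 by (metis g3_f54 g3_f187815)
  have g3_f190063: "p u (p x64 x65 x66) x64 = p u x65 (p u x66 x64)" for x64 x65 x66 by (metis g3_f54 g3_f187815)
  have g3_f190216: "p u (p x62 x63 x61) x61 = p u x62 (p x61 x63 u)" for x61 x62 x63 by (metis g3_f190062 g3_f189977)
  have g3_f190238: "p x426 (p u (p x426 x427 u) x428) u = p (p u x427 (p u u x426)) (p z x427 x428) u" for x426 x427 x428 by (metis g3_f189269 g3_f190063)
  have g3_f190262: "p x426 (p u (p x426 x427 u) x428) u = p (p u x427 x426) (p z x427 x428) u" for x426 x427 x428 by (metis g3_f190238 g3_f43)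
  have g3_f190263: "p u x427 (p x426 x428 u) = p x426 (p u (p x426 x427 u) x428) u" for x426 x427 x428 by (metis g3_f190262 g3_f188080)
  have g3_f191987: "p z u x365 = p z (p x363 (p u (p x363 x364 u) x364) u) x365" for x363 x364 x365 by (metis g3_f7757 g3_f188851)
  have g3_f192318: "p z u x365 = p z (p u x364 (p x363 x364 u)) x365" for x363 x364 x365 by (metis g3_f191987 g3_f190263)
  have g3_f192319: "p z (p u x364 (p x363 x364 u)) x365 = x365" for x363 x364 x365 by (metis g3_f192318 g3_f43)
  have g3_f194756: "u = p u x16 (p x17 x16 u)" for x16 x17 by (metis g3_f192319 g3_f39)
  have g3_f195898: "u = p u (p z x6 x7) x6" for x6 x7 by (metis g3_f194756 g3_f48)
  have g3_f195900: "u = p u (p z x11 x10) x10" for x10 x11 by (metis g3_f194756 g3_f122)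
  have g3_f195932: "u = p u x102 (p x102 x101 u)" for x101 x102 by (metis g3_f194756 g3_f46)
  have g3_f197831: "p x1 x0 u = p u (p u x0 z) x1" for x0 x1 by (metis g3_f188689 g3_f164902)
  have g3_f197842: "p (p u x7 z) x6 u = p u x7 x6" for x6 x7 by (metis g3_f188689 g3_f46)
  have g3_f197879: "p x88 (p u x89 z) u = p u x89 (p z x88 (p u (p u x89 z) z))" for x88 x89 by (metis g3_f188689 g3_f148759)
  have g3_f197881: "p x94 (p u x93 z) u = p u x93 (p z (p u (p u x93 z) z) x94)" for x93 x94 by (metis g3_f188689 g3_f146996)
  have g3_f198288: "p x88 (p u x89 z) u = p u x89 (p z x88 (p z x89 (p u z z)))" for x88 x89 by (metis g3_f197879 g3_f174237)
  have g3_f198289: "p x88 (p u x89 z) u = p u x89 (p z x88 (p z x89 u))" for x88 x89 by (metis g3_f198288 g3_f44)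
  have g3_f198290: "p x88 (p u x89 z) u = p u x89 (p z x88 x89)" for x88 x89 by (metis g3_f198289 g3_f39)
  have g3_f198291: "p u x89 x88 = p u x89 (p z x88 x89)" for x88 x89 by (metis g3_f198290 g3_f188689)
  have g3_f198297: "p x94 (p u x93 z) u = p u x93 (p z (p z x93 (p u z z)) x94)" for x93 x94 by (metis g3_f197881 g3_f174237)
  have g3_f198298: "p x94 (p u x93 z) u = p u x93 (p z x93 (p z (p u z z) x94))" for x93 x94 by (metis g3_f198297 g3_f174238)
  have g3_f198299: "p x94 (p u x93 z) u = p u x93 (p z x93 (p z u x94))" for x93 x94 by (metis g3_f198298 g3_f44)
  have g3_f198300: "p x94 (p u x93 z) u = p u x93 (p z x93 x94)" for x93 x94 by (metis g3_f198299 g3_f43)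
  have g3_f198301: "p u x93 x94 = p u x93 (p z x93 x94)" for x93 x94 by (metis g3_f198300 g3_f188689)
  have g3_f209895: "p u (p u x121 x122) (p z x121 x122) = p u (p u x121 x122) x121" for x121 x122 by (metis g3_f198291 g3_f188589)
  have g3_f214110: "z = p z (p (p z x11 x10) x10 z) u" for x10 x11 by (metis g3_f179849 g3_f122)
  have g3_f214298: "z = p x8 (p x9 x8 u) z" for x8 x9 by (metis g3_f179849 g3_f39)
  have g3_f214623: "z = p z (p z (p x11 x10 z) x10) u" for x10 x11 by (metis g3_f214110 g3_f174554)
  have g3_f214624: "z = p z (p z x10 (p x11 x10 z)) u" for x10 x11 by (metis g3_f214623 g3_f47)
  have g3_f215837: "z = p (p z x11 x10) x10 z" for x10 x11 by (metis g3_f214298 g3_f122)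
  have g3_f229723: "p u (p x499 x500 z) (p u x499 z) = p u (p x499 x500 z) z" for x499 x500 by (metis g3_f198291 g3_f177860)
  have g3_f229866: "p u (p x499 x500 z) (p u x499 z) = p u x499 (p z x500 u)" for x499 x500 by (metis g3_f229723 g3_f188070)
  have g3_f229867: "p u (p x499 x500 z) (p u x499 z) = p z (p u x499 x500) u" for x499 x500 by (metis g3_f229866 g3_f174237)
  have g3_f229868: "p u x499 x500 = p u (p x499 x500 z) (p u x499 z)" for x499 x500 by (metis g3_f229867 g3_f39)
  have g3_f230162: "p u (p x477 x478 z) z = p u (p x477 x478 z) (p u x477 z)" for x477 x478 by (metis g3_f198301 g3_f177863)
  have g3_f230264: "p u (p x477 x478 z) z = p u x477 x478" for x477 x478 by (metis g3_f230162 g3_f229868)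
  have g3_f234210: "z = p z (p x5 x4 z) x4" for x4 x5 by (metis g3_f214624 g3_f5642)
  have g3_f235142: "p u x433 z = p u x433 (p x432 x433 z)" for x432 x433 by (metis g3_f198291 g3_f234210)
  have g3_f244114: "p u u (p x106 x107 z) = p u (p u x106 x107) z" for x106 x107 by (metis g3_f230264 g3_f230264)
  have g3_f244164: "p u (p u x89 x90) z = p x89 x90 z" for x89 x90 by (metis g3_f164902 g3_f230264)
  have g3_f244300: "p z x106 (p u x107 z) = p u u (p x106 x107 z)" for x106 x107 by (metis g3_f244114 g3_f174237)
  have g3_f244301: "p z x106 (p u x107 z) = p x106 x107 z" for x106 x107 by (metis g3_f244300 g3_f43)
  have g3_f244370: "p z (p x1 x0 u) (p u x0 z) = p x1 x0 z" for x0 x1 by (metis g3_f169728 g3_f244301)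
  have g3_f244657: "p z (p u x0 z) x1 = p x1 x0 z" for x0 x1 by (metis g3_f167343 g3_f244370)
  have g3_f248959: "p z x0 x1 = p x1 (p u x0 z) z" for x0 x1 by (metis g3_f244657 g3_f164902)
  have g3_f248968: "p x22 (p x20 x21 z) z = p z (p u x20 x21) x22" for x20 x21 x22 by (metis g3_f244657 g3_f230264)
  have g3_f248988: "p u x15 z = p (p (p u x15 z) x16 u) x15 z" for x15 x16 by (metis g3_f244657 g3_f49)
  have g3_f249022: "p z x111 (p u x110 z) = p (p u (p u x110 z) x111) x110 z" for x110 x111 by (metis g3_f244657 g3_f188772)
  have g3_f249451: "p u x15 z = p (p u (p x15 x16 z) z) x15 z" for x15 x16 by (metis g3_f248988 g3_f174554)
  have g3_f249452: "p u x15 z = p (p z (p u x15 x16) u) x15 z" for x15 x16 by (metis g3_f249451 g3_f248968)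
  have g3_f249453: "p u x15 z = p (p u x15 x16) x15 z" for x15 x16 by (metis g3_f249452 g3_f39)
  have g3_f249521: "p z x111 (p u x110 z) = p (p x111 x110 u) x110 z" for x110 x111 by (metis g3_f249022 g3_f197831)
  have g3_f249522: "p x111 x110 z = p (p x111 x110 u) x110 z" for x110 x111 by (metis g3_f249521 g3_f244301)
  have g3_f250314: "p u (p u x44 z) z = p u (p u x44 x45) x44" for x44 x45 by (metis g3_f230264 g3_f249453)
  have g3_f250384: "p z x44 (p u z z) = p u (p u x44 x45) x44" for x44 x45 by (metis g3_f250314 g3_f174237)
  have g3_f250385: "p x44 z z = p u (p u x44 x45) x44" for x44 x45 by (metis g3_f250384 g3_f244301)
  have g3_f250386: "p u (p u x44 x45) x44 = x44" for x44 x45 by (metis g3_f250385 g3_f44)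
  have g3_f250389: "p u (p u x121 x122) (p z x121 x122) = x121" for x121 x122 by (metis g3_f209895 g3_f250386)
  have g3_f251355: "p x6 (p x7 x6 z) z = p (p x6 x7 u) (p x7 x6 z) z" for x6 x7 by (metis g3_f249522 g3_f180560)
  have g3_f251518: "p u (p x48 x49 z) z = p u (p x48 x49 u) x49" for x48 x49 by (metis g3_f230264 g3_f249522)
  have g3_f251668: "p z (p u x48 x49) u = p u (p x48 x49 u) x49" for x48 x49 by (metis g3_f251518 g3_f248968)
  have g3_f251669: "p u x48 x49 = p u (p x48 x49 u) x49" for x48 x49 by (metis g3_f251668 g3_f39)
  have g3_f252607: "p x114 x115 u = p u (p u (p x114 x115 u) x114) x114" for x114 x115 by (metis g3_f250389 g3_f392)
  have g3_f252608: "p x116 x117 u = p u (p u (p x116 x117 u) x117) x117" for x116 x117 by (metis g3_f250389 g3_f393)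
  have g3_f252974: "p x114 x115 u = p u (p u x115 (p u u x114)) x114" for x114 x115 by (metis g3_f252607 g3_f190063)
  have g3_f252975: "p x114 x115 u = p u (p u x115 x114) x114" for x114 x115 by (metis g3_f252974 g3_f43)
  have g3_f252976: "p x116 x117 u = p u (p u x116 x117) x117" for x116 x117 by (metis g3_f252608 g3_f251669)
  have g3_f257323: "p z (p u x55 x56) x56 = p z (p x55 x56 u) (p u x55 x56)" for x55 x56 by (metis g3_f188681 g3_f252976)
  have g3_f257684: "p z x56 (p u x55 x56) = p z (p x55 x56 u) (p u x55 x56)" for x55 x56 by (metis g3_f257323 g3_f47)
  have g3_f257685: "p z (p x55 x56 u) (p u x55 x56) = x56" for x55 x56 by (metis g3_f257684 g3_f176043)
  have g3_f273698: "p x85 (p z x85 x86) z = p u (p u x85 x86) z" for x85 x86 by (metis g3_f244164 g3_f198301)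
  have g3_f273699: "p u (p u x87 z) z = p x87 (p x88 x87 z) z" for x87 x88 by (metis g3_f244164 g3_f235142)
  have g3_f273965: "p x85 x86 z = p x85 (p z x85 x86) z" for x85 x86 by (metis g3_f273698 g3_f244164)
  have g3_f273976: "p z x87 u = p x87 (p x88 x87 z) z" for x87 x88 by (metis g3_f273699 g3_f248959)
  have g3_f273977: "p x87 (p x88 x87 z) z = x87" for x87 x88 by (metis g3_f273976 g3_f39)
  have g3_f273980: "p (p x6 x7 u) (p x7 x6 z) z = x6" for x6 x7 by (metis g3_f251355 g3_f273977)
  have g3_f274782: "p z x287 x288 = p x287 (p x287 (p z x287 x288) z) z" for x287 x288 by (metis g3_f273980 g3_f511)
  have g3_f275066: "p z x287 x288 = p x287 (p x287 x288 z) z" for x287 x288 by (metis g3_f274782 g3_f273965)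
  have g3_f276116: "p (p x20 x21 z) x20 u = p (p z x20 x21) (p x20 x21 z) u" for x20 x21 by (metis g3_f182438 g3_f275066)
  have g3_f276496: "p (p z x20 x21) (p x20 x21 z) u = p x20 (p x20 x21 z) u" for x20 x21 by (metis g3_f276116 g3_f46)
  have g3_f276497: "p (p z x20 x21) (p x20 x21 z) u = p x20 x21 (p x20 z u)" for x20 x21 by (metis g3_f276496 g3_f174293)
  have g3_f276498: "p (p z x20 x21) (p x20 x21 z) u = p x20 x21 x20" for x20 x21 by (metis g3_f276497 g3_f44)
  have g3_f276499: "p (p z x20 x21) (p x20 x21 z) u = x20" for x20 x21 by (metis g3_f276498 g3_f45)
  have g3_f281071: "p x30 (p x28 x29 z) z = p z x30 (p u x28 x29)" for x28 x29 x30 by (metis g3_f244301 g3_f230264)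
  have g3_f294128: "p x3 (p z x0 x1) (p x2 x0 x3) = p x2 u x3" for x0 x1 x2 x3 by (metis g3_f174237 g3_f195898)
  have g3_f294130: "p x11 (p z x8 x9) (p x10 x9 x11) = p x10 u x11" for x10 x11 x8 x9 by (metis g3_f174237 g3_f195900)
  have g3_f294139: "p x50 (p u x48 z) (p x49 z x50) = p x49 x48 x50" for x48 x49 x50 by (metis g3_f174237 g3_f164902)
  have g3_f294165: "p x165 x163 (p x164 x163 x165) = p x164 u x165" for x163 x164 x165 by (metis g3_f174237 g3_f187815)
  have g3_f294171: "p x189 x186 (p x188 (p x187 x186 u) x189) = p x188 u x189" for x186 x187 x188 x189 by (metis g3_f174237 g3_f194756)
  have g3_f294175: "p x208 x205 (p x207 (p x205 x206 u) x208) = p x207 u x208" for x205 x206 x207 x208 by (metis g3_f174237 g3_f195932)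
  have g3_f294303: "p z x115 x116 = p x115 x115 (p z x116 x115)" for x115 x116 by (metis g3_f174237 g3_f188681)
  have g3_f294650: "p u (p u x847 x845) (p z x846 x845) = p (p z x846 x845) x847 (p u x845 x846)" for x845 x846 x847 by (metis g3_f174237 g3_f198291)
  have g3_f294652: "p u (p u x853 x851) (p z x851 x852) = p (p z x851 x852) x853 (p u x851 x852)" for x851 x852 x853 by (metis g3_f174237 g3_f198301)
  have g3_f295747: "p x3 (p z x0 x1) (p x2 x0 x3) = x3" for x0 x1 x2 x3 by (metis g3_f294128 g3_f43)
  have g3_f295748: "p x11 (p z x8 x9) (p x10 x9 x11) = x11" for x10 x11 x8 x9 by (metis g3_f294130 g3_f43)
  have g3_f295752: "p x49 x48 x50 = p x50 (p u x48 z) x49" for x48 x49 x50 by (metis g3_f294139 g3_f44)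
  have g3_f295777: "p x165 x163 (p x164 x163 x165) = x165" for x163 x164 x165 by (metis g3_f294165 g3_f43)
  have g3_f295782: "p x189 x186 (p x188 (p x187 x186 u) x189) = x189" for x186 x187 x188 x189 by (metis g3_f294171 g3_f43)
  have g3_f295786: "p x208 x205 (p x207 (p x205 x206 u) x208) = x208" for x205 x206 x207 x208 by (metis g3_f294175 g3_f43)
  have g3_f305103: "p (p x40 (p u x39 z) x38) x39 x38 = x38" for x38 x39 x40 by (metis g3_f295752 g3_f295777)
  have g3_f306010: "p (p x38 x39 x40) x39 x38 = x38" for x38 x39 x40 by (metis g3_f305103 g3_f295752)
  have g3_f314251: "p x11 (p z (p u x10 z) x12) (p x11 x10 x9) = x11" for x10 x11 x12 x9 by (metis g3_f295747 g3_f295752)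
  have g3_f314961: "p x11 (p x12 x10 z) (p x11 x10 x9) = x11" for x10 x11 x12 x9 by (metis g3_f314251 g3_f295752)
  have g3_f426892: "p x16 x14 x17 = p x16 x14 (p x16 (p x14 x15 u) x17)" for x14 x15 x16 x17 by (metis g3_f174238 g3_f49)
  have g3_f426897: "p x39 x37 x40 = p x39 x37 (p x39 (p x38 x37 u) x40)" for x37 x38 x39 x40 by (metis g3_f174238 g3_f150)
  have g3_f430070: "p z (p x619 x621 u) (p u x619 x620) = p (p z x620 x619) x621 (p u x619 x620)" for x619 x620 x621 by (metis g3_f174553 g3_f188772)
  have g3_f430071: "p z (p x622 x624 u) (p u x622 x623) = p (p z x622 x623) x624 (p u x622 x623)" for x622 x623 x624 by (metis g3_f174553 g3_f188589)
  have g3_f431178: "p u (p u x847 x845) (p z x846 x845) = p z (p x845 x847 u) (p u x845 x846)" for x845 x846 x847 by (metis g3_f294650 g3_f430070)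
  have g3_f431186: "p u (p u x853 x851) (p z x851 x852) = p z (p x851 x853 u) (p u x851 x852)" for x851 x852 x853 by (metis g3_f294652 g3_f430071)
  have g3_f436745: "p z (p x18 x19 x19) x18 = x18" for x18 x19 by (metis g3_f174294 g3_f295777)
  have g3_f436746: "p z (p x20 x21 (p x22 x21 u)) x20 = x20" for x20 x21 x22 by (metis g3_f174294 g3_f295782)
  have g3_f436747: "p z (p x23 x24 (p x24 x25 u)) x23 = x23" for x23 x24 x25 by (metis g3_f174294 g3_f295786)
  have g3_f436750: "p z x31 x32 = p z (p x31 x31 x32) x31" for x31 x32 by (metis g3_f174294 g3_f294303)
  have g3_f438180: "p x107 x107 x108 = p z x107 (p x107 x107 x108)" for x107 x108 by (metis g3_f436745 g3_f306010)
  have g3_f448437: "p z x59 (p z x59 x60) = p z x59 (p x59 x59 x60)" for x59 x60 by (metis g3_f660 g3_f436750)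
  have g3_f449172: "p z x59 (p z x59 x60) = p x59 x59 x60" for x59 x60 by (metis g3_f448437 g3_f438180)
  have g3_f453640: "p z x3 x2 = p x2 x2 x3" for x2 x3 by (metis g3_f449172 g3_f4685)
  have g3_f454940: "p u (p u x331 x332) (p x332 x332 x331) = x331" for x331 x332 by (metis g3_f250389 g3_f453640)
  have g3_f454946: "p (p x344 x344 x343) (p x343 x344 z) u = x343" for x343 x344 by (metis g3_f276499 g3_f453640)
  have g3_f472878: "p x487 x488 (p x489 x488 u) = p u (p u (p x487 x488 (p x489 x488 u)) x487) x487" for x487 x488 x489 by (metis g3_f250389 g3_f436746)
  have g3_f473397: "p x487 x488 (p x489 x488 u) = p u (p u x488 (p u (p x489 x488 u) x487)) x487" for x487 x488 x489 by (metis g3_f472878 g3_f190063)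
  have g3_f473398: "p u (p u x488 x487) x487 = p x487 x488 (p x489 x488 u)" for x487 x488 x489 by (metis g3_f473397 g3_f426897)
  have g3_f473399: "p x487 x488 u = p x487 x488 (p x489 x488 u)" for x487 x488 x489 by (metis g3_f473398 g3_f252975)
  have g3_f499298: "p x489 x490 (p x490 x491 u) = p u (p u (p x489 x490 (p x490 x491 u)) x489) x489" for x489 x490 x491 by (metis g3_f250389 g3_f436747)
  have g3_f499853: "p x489 x490 (p x490 x491 u) = p u (p u x490 (p u (p x490 x491 u) x489)) x489" for x489 x490 x491 by (metis g3_f499298 g3_f190063)
  have g3_f499854: "p x489 x490 (p x490 x491 u) = p u (p u x490 x489) x489" for x489 x490 x491 by (metis g3_f499853 g3_f426892)
  have g3_f499855: "p x489 x490 u = p x489 x490 (p x490 x491 u)" for x489 x490 x491 by (metis g3_f499854 g3_f252975)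
  have g3_f523004: "p x154 x152 (p z x152 x153) = p u (p u (p x154 x152 (p z x152 x153)) (p z x152 x153)) (p z x152 x153)" for x152 x153 x154 by (metis g3_f454940 g3_f295747)
  have g3_f523005: "p x157 x156 (p z x155 x156) = p u (p u (p x157 x156 (p z x155 x156)) (p z x155 x156)) (p z x155 x156)" for x155 x156 x157 by (metis g3_f454940 g3_f295748)
  have g3_f523793: "p x154 x152 (p z x152 x153) = p u (p u x154 (p (p z x152 x153) x152 u)) (p z x152 x153)" for x152 x153 x154 by (metis g3_f523004 g3_f190216)
  have g3_f523794: "p x154 x152 (p z x152 x153) = p u (p u x154 (p x152 (p z x152 x153) u)) (p z x152 x153)" for x152 x153 x154 by (metis g3_f523793 g3_f46)
  have g3_f523795: "p x154 x152 (p z x152 x153) = p u (p u x154 x152) (p z x152 x153)" for x152 x153 x154 by (metis g3_f523794 g3_f48)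
  have g3_f523796: "p z (p x851 x853 u) (p u x851 x852) = p x853 x851 (p z x851 x852)" for x851 x852 x853 by (metis g3_f431186 g3_f523795)
  have g3_f523799: "p u (p u x847 x845) (p z x846 x845) = p x847 x845 (p z x845 x846)" for x845 x846 x847 by (metis g3_f431178 g3_f523796)
  have g3_f523812: "p x157 x156 (p z x155 x156) = p u (p u x157 (p (p z x155 x156) x156 u)) (p z x155 x156)" for x155 x156 x157 by (metis g3_f523005 g3_f190216)
  have g3_f523813: "p x157 x156 (p z x155 x156) = p u (p u x157 (p x156 (p z x155 x156) u)) (p z x155 x156)" for x155 x156 x157 by (metis g3_f523812 g3_f46)
  have g3_f523814: "p x157 x156 (p z x155 x156) = p u (p u x157 x156) (p z x155 x156)" for x155 x156 x157 by (metis g3_f523813 g3_f122)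
  have g3_f543034: "p x676 x675 u = p x676 x675 (p u x674 x675)" for x674 x675 x676 by (metis g3_f473399 g3_f176065)
  have g3_f575302: "p (p x161 x162 u) x161 u = p x161 (p x162 x161 x163) u" for x161 x162 x163 by (metis g3_f499855 g3_f54)
  have g3_f575973: "p x161 x162 u = p x161 (p x162 x161 x163) u" for x161 x162 x163 by (metis g3_f575302 g3_f166)
  have g3_f607818: "p u (p x145 x146 x147) x146 = p (p u x145 x146) x146 u" for x145 x146 x147 by (metis g3_f543034 g3_f54)
  have g3_f608505: "p u x145 x146 = p u (p x145 x146 x147) x146" for x145 x146 x147 by (metis g3_f607818 g3_f176065)
  have g3_f640134: "p (p x196 x197 z) x197 x198 = p (p x196 x197 z) (p (p (p x196 x197 z) x197 x198) (p x196 x197 z) z) u" for x196 x197 x198 by (metis g3_f454946 g3_f314961)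
  have g3_f641035: "p (p x196 x197 z) x197 x198 = p (p x196 x197 z) (p z (p (p x196 x197 z) x197 x198) (p u x196 x197)) u" for x196 x197 x198 by (metis g3_f640134 g3_f281071)
  have g3_f641036: "p (p x196 x197 z) x197 x198 = p (p x196 x197 z) (p z (p u x196 x197) (p (p x196 x197 z) x197 x198)) u" for x196 x197 x198 by (metis g3_f641035 g3_f47)
  have g3_f739114: "p (p u x191 z) x192 u = p u x191 (p x192 (p u x191 z) x193)" for x191 x192 x193 by (metis g3_f575973 g3_f197842)
  have g3_f739313: "p x612 x611 x613 = p z (p x611 x612 u) (p u x611 (p x612 x611 x613))" for x611 x612 x613 by (metis g3_f257685 g3_f575973)
  have g3_f740432: "p (p u x191 z) x192 u = p u x191 (p x193 x191 x192)" for x191 x192 x193 by (metis g3_f739114 g3_f295752)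
  have g3_f740433: "p u x191 x192 = p u x191 (p x193 x191 x192)" for x191 x192 x193 by (metis g3_f740432 g3_f197842)
  have g3_f740550: "p x612 x611 x613 = p z (p x611 x612 u) (p u x611 x613)" for x611 x612 x613 by (metis g3_f739313 g3_f740433)
  have g3_f740551: "p x853 x851 (p z x851 x852) = p x853 x851 x852" for x851 x852 x853 by (metis g3_f523796 g3_f740550)
  have g3_f740568: "p u (p u x847 x845) (p z x846 x845) = p x847 x845 x846" for x845 x846 x847 by (metis g3_f523799 g3_f740551)
  have g3_f740638: "p x157 x156 x155 = p x157 x156 (p z x155 x156)" for x155 x156 x157 by (metis g3_f523814 g3_f740568)
  have g3_f741482: "p (p z (p u x108 z) x109) x108 x107 = p x107 (p u x108 z) x109" for x107 x108 x109 by (metis g3_f740551 g3_f295752)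
  have g3_f742411: "p x109 x108 x107 = p (p z (p u x108 z) x109) x108 x107" for x107 x108 x109 by (metis g3_f741482 g3_f295752)
  have g3_f742412: "p x109 x108 x107 = p (p x109 x108 z) x108 x107" for x107 x108 x109 by (metis g3_f742411 g3_f295752)
  have g3_f742441: "p x196 x197 x198 = p (p x196 x197 z) (p z (p u x196 x197) (p x196 x197 x198)) u" for x196 x197 x198 by (metis g3_f641036 g3_f742412)
  have g3_f754487: "p z x407 x408 = p (p z x406 x407) x407 x408" for x406 x407 x408 by (metis g3_f742412 g3_f215837)
  have g3_f756753: "p (p z x1533 x1534) x1534 x1535 = p z (p x1533 x1534 x1535) x1534" for x1533 x1534 x1535 by (metis g3_f54 g3_f740638)
  have g3_f757191: "p (p z x1533 x1534) x1534 x1535 = p z x1534 (p x1533 x1534 x1535)" for x1533 x1534 x1535 by (metis g3_f756753 g3_f47)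
  have g3_f757192: "p z x1534 x1535 = p z x1534 (p x1533 x1534 x1535)" for x1533 x1534 x1535 by (metis g3_f757191 g3_f754487)
  have g3_f816922: "p z x78 (p x77 x78 x79) = p z (p u x77 x78) (p x77 x78 x79)" for x77 x78 x79 by (metis g3_f188780 g3_f608505)
  have g3_f818039: "p z x78 x79 = p z (p u x77 x78) (p x77 x78 x79)" for x77 x78 x79 by (metis g3_f816922 g3_f757192)
  have g3_f818040: "p (p x196 x197 z) (p z x197 x198) u = p x196 x197 x198" for x196 x197 x198 by (metis g3_f742441 g3_f818039)
  show ?thesis by (metis g3_f244301 g3_f47 g3_f818040)
qed

end

locale tern_br = tern +
  fixes pl :: "'a \<Rightarrow> 'a \<Rightarrow> 'a" and ng :: "'a \<Rightarrow> 'a"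
  assumes R_pa: "\<And>x y w. pl (pl x y) w = pl x (pl y w)"
    and R_pc: "\<And>x y. pl x y = pl y x"
    and R_p0: "\<And>x. pl z x = x"
    and R_pn: "\<And>x. pl x (ng x) = z"
    and R_m1: "\<And>x. p z u x = x"
    and R_m2: "\<And>x. p z x u = x"
    and R_ld: "\<And>x y w. p z (pl x y) w = pl (p z x w) (p z y w)"
    and R_rd: "\<And>x y w. p z w (pl x y) = pl (p z w x) (p z w y)"
    and R_id: "\<And>x. p z x x = x"
    and R_pld: "\<And>x y. pl x y = p x y (p u x z)"
begin

lemma xx: "pl x x = z"
proof -
  have bxx_f26: "pl x0 x1 = p x0 x1 (p u x0 z)" for x0 x1 by (metis R_pld)
  have bxx_f29: "p z x2 (pl x0 x1) = pl (p z x2 x0) (p z x2 x1)" for x0 x1 x2 by (metis R_rd)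
  have bxx_f38: "p z x0 u = x0" for x0 by (metis t1)
  have bxx_f42: "p x1 u x0 = x0" for x0 x1 by (metis t4b)
  have bxx_f44: "p x0 x1 x0 = x0" for x0 x1 by (metis t2)
  have bxx_f46: "pl x0 x1 = p x0 x1 (p u x0 z)" for x0 x1 by (metis bxx_f26)
  have bxx_f49: "p z x2 (pl x0 x1) = pl (p z x2 x0) (p z x2 x1)" for x0 x1 x2 by (metis bxx_f29)
  have bxx_f63: "p u x0 z = pl u x0" for x0 by (metis bxx_f46 bxx_f42)
  have bxx_f75: "z = pl u u" by (metis bxx_f63 bxx_f42)
  have bxx_f1372: "p z x0 (pl u x1) = pl x0 (p z x0 x1)" for x0 x1 by (metis bxx_f49 bxx_f38)
  have bxx_f22132: "pl x0 x0 = p z x0 (pl u u)" for x0 by (metis bxx_f1372 bxx_f38)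
  have bxx_f22240: "pl x0 x0 = p z x0 z" for x0 by (metis bxx_f22132 bxx_f75)
  have bxx_f22241: "z = pl x0 x0" for x0 by (metis bxx_f22240 bxx_f44)
  show ?thesis by (metis bxx_f22241)
qed

lemma mc: "p z x y = p z y x"
proof -
  have bmc_f21: "z = pl x0 x0" for x0 by (metis xx)
  have bmc_f22: "pl z x0 = x0" for x0 by (metis R_p0)
  have bmc_f25: "p z u x0 = x0" for x0 by (metis R_m1)
  have bmc_f26: "p z x0 x0 = x0" for x0 by (metis R_id)
  have bmc_f27: "pl x0 x1 = pl x1 x0" for x0 x1 by (metis R_pc)
  have bmc_f29: "pl (pl x0 x1) x2 = pl x0 (pl x1 x2)" for x0 x1 x2 by (metis R_pa)
  have bmc_f30: "p z (p z x0 x1) x2 = p z x0 (p z x1 x2)" for x0 x1 x2 by (metis ma)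
  have bmc_f31: "p z x2 (pl x0 x1) = pl (p z x2 x0) (p z x2 x1)" for x0 x1 x2 by (metis R_rd)
  have bmc_f32: "p z (pl x0 x1) x2 = pl (p z x0 x2) (p z x1 x2)" for x0 x1 x2 by (metis R_ld)
  have bmc_f33: "p x0 (p x1 x2 x3) x4 = p (p x0 x1 x4) x2 (p x0 x3 x4)" for x0 x1 x2 x3 x4 by (metis t3)
  have bmc_f38: "z = pl x0 x0" for x0 by (metis bmc_f21)
  have bmc_f39: "pl z x0 = x0" for x0 by (metis bmc_f22)
  have bmc_f41: "p z x0 u = x0" for x0 by (metis t1)
  have bmc_f43: "p z u x0 = x0" for x0 by (metis bmc_f25)
  have bmc_f44: "p z x0 x0 = x0" for x0 by (metis bmc_f26)
  have bmc_f46: "p x0 z x1 = x0" for x0 x1 by (metis t4a)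
  have bmc_f48: "pl x0 x1 = pl x1 x0" for x0 x1 by (metis bmc_f27)
  have bmc_f50: "pl (pl x0 x1) x2 = pl x0 (pl x1 x2)" for x0 x1 x2 by (metis bmc_f29)
  have bmc_f51: "p z (p z x0 x1) x2 = p z x0 (p z x1 x2)" for x0 x1 x2 by (metis bmc_f30)
  have bmc_f52: "p z x2 (pl x0 x1) = pl (p z x2 x0) (p z x2 x1)" for x0 x1 x2 by (metis bmc_f31)
  have bmc_f53: "p z (pl x0 x1) x2 = pl (p z x0 x2) (p z x1 x2)" for x0 x1 x2 by (metis bmc_f32)
  have bmc_f54: "p x0 (p x1 x2 x3) x4 = p (p x0 x1 x4) x2 (p x0 x3 x4)" for x0 x1 x2 x3 x4 by (metis bmc_f33)
  have bmc_f122: "pl z x1 = pl x0 (pl x0 x1)" for x0 x1 by (metis bmc_f50 bmc_f38)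
  have bmc_f141: "pl x0 (pl x0 x1) = x1" for x0 x1 by (metis bmc_f122 bmc_f39)
  have bmc_f149: "pl x2 (pl x3 x2) = x3" for x2 x3 by (metis bmc_f141 bmc_f48)
  have bmc_f192: "pl (pl x13 x12) x13 = x12" for x12 x13 by (metis bmc_f149 bmc_f149)
  have bmc_f238: "p z x2 x3 = p z x2 (p z x2 x3)" for x2 x3 by (metis bmc_f51 bmc_f44)
  have bmc_f4826: "p z x0 (pl u x1) = pl x0 (p z x0 x1)" for x0 x1 by (metis bmc_f52 bmc_f41)
  have bmc_f4827: "p z x2 (pl x2 x3) = pl x2 (p z x2 x3)" for x2 x3 by (metis bmc_f52 bmc_f44)
  have bmc_f4837: "p z x2 (pl x3 x2) = pl (p z x2 x3) x2" for x2 x3 by (metis bmc_f52 bmc_f44)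
  have bmc_f15432: "p z (pl x2 x3) x2 = pl x2 (p z x3 x2)" for x2 x3 by (metis bmc_f53 bmc_f44)
  have bmc_f15434: "p z (pl u x8) x7 = pl x7 (p z x8 x7)" for x7 x8 by (metis bmc_f53 bmc_f43)
  have bmc_f19474: "p x8 (p z x10 x11) x9 = p x8 x10 (p x8 x11 x9)" for x10 x11 x8 x9 by (metis bmc_f54 bmc_f46)
  have bmc_f23289: "p z x4 (pl u x5) = p z x4 (pl x4 x5)" for x4 x5 by (metis bmc_f4827 bmc_f4826)
  have bmc_f23318: "p z x50 x51 = pl x50 (p z x50 (pl x50 x51))" for x50 x51 by (metis bmc_f141 bmc_f4827)
  have bmc_f24583: "pl (p z x2 x3) (p z x2 x3) = p z (pl (p z x2 x3) x2) (p z x2 x3)" for x2 x3 by (metis bmc_f15432 bmc_f238)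
  have bmc_f24617: "p z x0 (pl x1 (p z x0 x1)) = p z (pl (p z x0 x1) x0) (p z x0 x1)" for x0 x1 by (metis bmc_f15432 bmc_f52)
  have bmc_f24740: "pl (p z x2 x3) (p z x2 x3) = p z (pl x2 (p z x2 x3)) (p z x2 x3)" for x2 x3 by (metis bmc_f24583 bmc_f48)
  have bmc_f24741: "pl (p z x2 x3) (p z x2 x3) = p z (p z x2 (pl u x3)) (p z x2 x3)" for x2 x3 by (metis bmc_f24740 bmc_f4826)
  have bmc_f24742: "z = p z (p z x2 (pl u x3)) (p z x2 x3)" for x2 x3 by (metis bmc_f24741 bmc_f38)
  have bmc_f24863: "p z x0 (pl x1 (p z x0 x1)) = p z (pl x0 (p z x0 x1)) (p z x0 x1)" for x0 x1 by (metis bmc_f24617 bmc_f48)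
  have bmc_f24864: "p z x0 (pl x1 (p z x0 x1)) = p z (p z x0 (pl u x1)) (p z x0 x1)" for x0 x1 by (metis bmc_f24863 bmc_f4826)
  have bmc_f24865: "z = p z x0 (pl x1 (p z x0 x1))" for x0 x1 by (metis bmc_f24864 bmc_f24742)
  have bmc_f24866: "z = p z x0 (p z (pl x1 x0) x1)" for x0 x1 by (metis bmc_f24865 bmc_f15432)
  have bmc_f24990: "z = p z x6 (p z x7 (pl x6 x7))" for x6 x7 by (metis bmc_f24866 bmc_f192)
  have bmc_f25674: "z = p z (p z x2 x3) (p z x2 (p z x2 (pl x3 x2)))" for x2 x3 by (metis bmc_f24990 bmc_f4837)
  have bmc_f25785: "z = p z (p z x2 x3) (p z x2 (pl x3 x2))" for x2 x3 by (metis bmc_f25674 bmc_f238)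
  have bmc_f29243: "p z (p z x2 x3) (p z x2 (pl x3 x2)) = p z (p z x2 x3) (pl u x2)" for x2 x3 by (metis bmc_f23289 bmc_f4837)
  have bmc_f29405: "p z (p z x2 x3) (p z x2 (pl x3 x2)) = p z x2 (p z x3 (pl u x2))" for x2 x3 by (metis bmc_f29243 bmc_f19474)
  have bmc_f29406: "z = p z x2 (p z x3 (pl u x2))" for x2 x3 by (metis bmc_f29405 bmc_f25785)
  have bmc_f29708: "z = p z (pl x21 u) (p z x22 x21)" for x21 x22 by (metis bmc_f29406 bmc_f149)
  have bmc_f30832: "p z (pl u (pl x41 u)) (p z x42 x41) = pl (p z x42 x41) z" for x41 x42 by (metis bmc_f15434 bmc_f29708)
  have bmc_f30899: "p z (pl u (pl x41 u)) (p z x42 x41) = pl z (p z x42 x41)" for x41 x42 by (metis bmc_f30832 bmc_f48)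
  have bmc_f30900: "p z x42 x41 = p z (pl u (pl x41 u)) (p z x42 x41)" for x41 x42 by (metis bmc_f30899 bmc_f39)
  have bmc_f30901: "p z x42 x41 = p z x41 (p z x42 x41)" for x41 x42 by (metis bmc_f30900 bmc_f149)
  have bmc_f31108: "p z x29 (p z x30 x31) = p z x31 (p z x29 (p z x30 x31))" for x29 x30 x31 by (metis bmc_f30901 bmc_f51)
  have bmc_f31154: "p z x10 (p z x8 x9) = p z x8 (p z x9 (p z x10 (p z x8 x9)))" for x10 x8 x9 by (metis bmc_f30901 bmc_f51)
  have bmc_f31208: "p z x10 (p z x8 x9) = p z x8 (p z x10 (p z x8 x9))" for x10 x8 x9 by (metis bmc_f31154 bmc_f31108)
  have bmc_f31234: "p z (p z x2 x3) x2 = pl (p z x2 x3) (p z (p z x2 x3) (p z x2 (pl x3 x2)))" for x2 x3 by (metis bmc_f23318 bmc_f4837)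
  have bmc_f31459: "p z (p z x2 x3) x2 = pl (p z x2 x3) (p z x2 (p z x3 (p z x2 (pl x3 x2))))" for x2 x3 by (metis bmc_f31234 bmc_f19474)
  have bmc_f31460: "p z (p z x2 x3) x2 = pl (p z x2 x3) (p z x3 (p z x2 (pl x3 x2)))" for x2 x3 by (metis bmc_f31459 bmc_f31208)
  have bmc_f31461: "pl (p z x2 x3) z = p z (p z x2 x3) x2" for x2 x3 by (metis bmc_f31460 bmc_f24990)
  have bmc_f31462: "pl z (p z x2 x3) = p z (p z x2 x3) x2" for x2 x3 by (metis bmc_f31461 bmc_f48)
  have bmc_f31463: "p z x2 x3 = p z (p z x2 x3) x2" for x2 x3 by (metis bmc_f31462 bmc_f39)
  have bmc_f31828: "p z x7 x8 = p z x7 (p z x8 x7)" for x7 x8 by (metis bmc_f31463 bmc_f51)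
  have bmc_f32745: "p z x7 x8 = p z x8 x7" for x7 x8 by (metis bmc_f31828 bmc_f30901)
  show ?thesis by (metis bmc_f32745)
qed

lemma s2: "p (p x a y) a x = x"
proof -
  have bs2_f22: "z = pl x0 x0" for x0 by (metis xx)
  have bs2_f23: "pl z x0 = x0" for x0 by (metis R_p0)
  have bs2_f25: "p z x0 u = x0" for x0 by (metis R_m2)
  have bs2_f27: "p z x0 x0 = x0" for x0 by (metis R_id)
  have bs2_f28: "pl x0 x1 = pl x1 x0" for x0 x1 by (metis R_pc)
  have bs2_f29: "pl x0 x1 = p x0 x1 (p u x0 z)" for x0 x1 by (metis R_pld)
  have bs2_f30: "pl (pl x0 x1) x2 = pl x0 (pl x1 x2)" for x0 x1 x2 by (metis R_pa)
  have bs2_f31: "p z (p z x0 x1) x2 = p z x0 (p z x1 x2)" for x0 x1 x2 by (metis ma)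
  have bs2_f32: "p z x2 (pl x0 x1) = pl (p z x2 x0) (p z x2 x1)" for x0 x1 x2 by (metis R_rd)
  have bs2_f34: "p x0 (p x1 x2 x3) x4 = p (p x0 x1 x4) x2 (p x0 x3 x4)" for x0 x1 x2 x3 x4 by (metis t3)
  have bs2_f39: "z = pl x0 x0" for x0 by (metis bs2_f22)
  have bs2_f40: "pl z x0 = x0" for x0 by (metis bs2_f23)
  have bs2_f42: "p z x0 u = x0" for x0 by (metis bs2_f25)
  have bs2_f45: "p z x0 x0 = x0" for x0 by (metis bs2_f27)
  have bs2_f46: "p x1 u x0 = x0" for x0 x1 by (metis t4b)
  have bs2_f47: "p x0 z x1 = x0" for x0 x1 by (metis t4a)
  have bs2_f49: "pl x0 x1 = pl x1 x0" for x0 x1 by (metis bs2_f28)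
  have bs2_f51: "pl x0 x1 = p x0 x1 (p u x0 z)" for x0 x1 by (metis bs2_f29)
  have bs2_f52: "pl (pl x0 x1) x2 = pl x0 (pl x1 x2)" for x0 x1 x2 by (metis bs2_f30)
  have bs2_f53: "p z (p z x0 x1) x2 = p z x0 (p z x1 x2)" for x0 x1 x2 by (metis bs2_f31)
  have bs2_f54: "p z x2 (pl x0 x1) = pl (p z x2 x0) (p z x2 x1)" for x0 x1 x2 by (metis bs2_f32)
  have bs2_f56: "p x0 (p x1 x2 x3) x4 = p (p x0 x1 x4) x2 (p x0 x3 x4)" for x0 x1 x2 x3 x4 by (metis bs2_f34)
  have bs2_f94: "p u x4 z = pl x4 u" for x4 by (metis bs2_f51 bs2_f46)
  have bs2_f184: "pl z x1 = pl x0 (pl x0 x1)" for x0 x1 by (metis bs2_f52 bs2_f39)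
  have bs2_f203: "pl x0 (pl x0 x1) = x1" for x0 x1 by (metis bs2_f184 bs2_f40)
  have bs2_f211: "pl x2 (pl x3 x2) = x3" for x2 x3 by (metis bs2_f203 bs2_f49)
  have bs2_f4513: "p z x0 (pl u x1) = pl x0 (p z x0 x1)" for x0 x1 by (metis bs2_f54 bs2_f42)
  have bs2_f18641: "pl x0 x0 = p z x0 (pl u x0)" for x0 by (metis bs2_f4513 bs2_f45)
  have bs2_f18757: "z = p z x0 (pl u x0)" for x0 by (metis bs2_f18641 bs2_f39)
  have bs2_f18846: "z = p z x0 (pl x0 u)" for x0 by (metis bs2_f18757 bs2_f49)
  have bs2_f18925: "p z z x3 = p z x2 (p z (pl x2 u) x3)" for x2 x3 by (metis bs2_f53 bs2_f18846)
  have bs2_f18940: "z = p z x2 (p z (pl x2 u) x3)" for x2 x3 by (metis bs2_f18925 bs2_f47)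
  have bs2_f19535: "p x4 (p u x6 x7) x5 = p x5 x6 (p x4 x7 x5)" for x4 x5 x6 x7 by (metis bs2_f56 bs2_f46)
  have bs2_f74952: "p x2 x0 (p x1 z x2) = p x1 (pl x0 u) x2" for x0 x1 x2 by (metis bs2_f19535 bs2_f94)
  have bs2_f75197: "p x1 (pl x0 u) x2 = p x2 x0 x1" for x0 x1 x2 by (metis bs2_f74952 bs2_f47)
  have bs2_f75843: "z = p z x17 (p x18 x17 z)" for x17 x18 by (metis bs2_f18940 bs2_f75197)
  have bs2_f77079: "z = p x35 (p u x34 x34) z" for x34 x35 by (metis bs2_f75843 bs2_f19535)
  have bs2_f78225: "z = pl (p u x9 x9) u" for x9 by (metis bs2_f77079 bs2_f94)
  have bs2_f78449: "pl u z = p u x82 x82" for x82 by (metis bs2_f211 bs2_f78225)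
  have bs2_f78620: "pl z u = p u x82 x82" for x82 by (metis bs2_f78449 bs2_f49)
  have bs2_f78621: "u = p u x82 x82" for x82 by (metis bs2_f78620 bs2_f40)
  have bs2_f78831: "p x6 x4 (p x5 x4 x6) = p x5 u x6" for x4 x5 x6 by (metis bs2_f19535 bs2_f78621)
  have bs2_f78849: "p x6 x4 (p x5 x4 x6) = x6" for x4 x5 x6 by (metis bs2_f78831 bs2_f46)
  have bs2_f82101: "p (p x14 (pl x13 u) x12) x13 x12 = x12" for x12 x13 x14 by (metis bs2_f78849 bs2_f75197)
  have bs2_f82254: "p (p x12 x13 x14) x13 x12 = x12" for x12 x13 x14 by (metis bs2_f82101 bs2_f75197)
  show ?thesis by (metis bs2_f82254)
qed

lemma s5: "p x a (p x b y) = p x b (p x a y)"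
proof -
  have bs5_f34: "p x0 (p x1 x2 x3) x4 = p (p x0 x1 x4) x2 (p x0 x3 x4)" for x0 x1 x2 x3 x4 by (metis t3)
  have bs5_f47: "p x0 z x1 = x0" for x0 x1 by (metis t4a)
  have bs5_f50: "p z x0 x1 = p z x1 x0" for x0 x1 by (metis mc)
  have bs5_f56: "p x0 (p x1 x2 x3) x4 = p (p x0 x1 x4) x2 (p x0 x3 x4)" for x0 x1 x2 x3 x4 by (metis bs5_f34)
  have bs5_f242: "p x4 (p z x6 x7) x5 = p x4 x6 (p x4 x7 x5)" for x4 x5 x6 x7 by (metis bs5_f56 bs5_f47)
  have bs5_f2463: "p x5 x3 (p x5 x4 x6) = p x5 (p z x4 x3) x6" for x3 x4 x5 x6 by (metis bs5_f242 bs5_f50)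
  have bs5_f71849: "p x9 x10 (p x9 x11 x12) = p x9 x11 (p x9 x10 x12)" for x10 x11 x12 x9 by (metis bs5_f2463 bs5_f242)
  show ?thesis by (metis bs5_f71849)
qed

lemma xxp: "p a a (p u a z) = z"
  using xx[of a] by (simp add: R_pld)

lemma P4: "p a a b = p z a b"
proof -
  have r4_f28: "pl z x0 = x0" for x0 by (metis R_p0)
  have r4_f29: "z = pl x0 (ng x0)" for x0 by (metis R_pn)
  have r4_f33: "pl x0 x1 = pl x1 x0" for x0 x1 by (metis R_pc)
  have r4_f34: "pl x0 x1 = p x0 x1 (p u x0 z)" for x0 x1 by (metis R_pld)
  have r4_f36: "p (p x0 x1 x2) x1 x0 = x0" for x0 x1 x2 by (metis s2)
  have r4_f37: "pl (pl x0 x1) x2 = pl x0 (pl x1 x2)" for x0 x1 x2 by (metis R_pa)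
  have r4_f40: "p x2 x1 x0 = p x0 (p u x1 z) x2" for x0 x1 x2 by (metis sw)
  have r4_f42: "p z x2 (pl x0 x1) = pl (p z x2 x0) (p z x2 x1)" for x0 x1 x2 by (metis R_rd)
  have r4_f44: "p x0 x1 (p x0 x2 x3) = p x0 x2 (p x0 x1 x3)" for x0 x1 x2 x3 by (metis s5)
  have r4_f50: "pl z x0 = x0" for x0 by (metis r4_f28)
  have r4_f51: "z = pl x0 (ng x0)" for x0 by (metis r4_f29)
  have r4_f52: "p z x0 u = x0" for x0 by (metis t1)
  have r4_f56: "z = p x0 x0 (p u x0 z)" for x0 by (metis xxp)
  have r4_f61: "pl x0 x1 = pl x1 x0" for x0 x1 by (metis r4_f33)
  have r4_f62: "p z x0 x1 = p z x1 x0" for x0 x1 by (metis mc)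
  have r4_f63: "pl x0 x1 = p x0 x1 (p u x0 z)" for x0 x1 by (metis r4_f34)
  have r4_f65: "p (p x0 x1 x2) x1 x0 = x0" for x0 x1 x2 by (metis r4_f36)
  have r4_f66: "pl (pl x0 x1) x2 = pl x0 (pl x1 x2)" for x0 x1 x2 by (metis r4_f37)
  have r4_f69: "p x2 x1 x0 = p x0 (p u x1 z) x2" for x0 x1 x2 by (metis r4_f40)
  have r4_f71: "p z x2 (pl x0 x1) = pl (p z x2 x0) (p z x2 x1)" for x0 x1 x2 by (metis r4_f42)
  have r4_f73: "p x0 x1 (p x0 x2 x3) = p x0 x2 (p x0 x1 x3)" for x0 x1 x2 x3 by (metis r4_f44)
  have r4_f138: "z = p x11 x11 z" for x11 by (metis r4_f65 r4_f52)
  have r4_f271: "p u x4 z = pl u x4" for x4 by (metis r4_f63 r4_f138)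
  have r4_f275: "z = pl x0 x0" for x0 by (metis r4_f63 r4_f56)
  have r4_f290: "p (pl x3 x4) x4 x3 = x3" for x3 x4 by (metis r4_f65 r4_f63)
  have r4_f389: "p (pl x2 x1) x2 x1 = x1" for x1 x2 by (metis r4_f290 r4_f61)
  have r4_f392: "p z (ng x6) x6 = x6" for x6 by (metis r4_f290 r4_f51)
  have r4_f406: "p z x1 (ng x1) = x1" for x1 by (metis r4_f392 r4_f62)
  have r4_f596: "ng x6 = p z x6 (ng x6)" for x6 by (metis r4_f389 r4_f51)
  have r4_f607: "ng x6 = x6" for x6 by (metis r4_f596 r4_f406)
  have r4_f682: "pl z x1 = pl x0 (pl x0 x1)" for x0 x1 by (metis r4_f66 r4_f275)
  have r4_f719: "pl x0 (pl x0 x1) = x1" for x0 x1 by (metis r4_f682 r4_f50)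
  have r4_f731: "pl x1 (pl x2 x1) = x2" for x1 x2 by (metis r4_f719 r4_f61)
  have r4_f758: "pl (pl x9 x8) x9 = x8" for x8 x9 by (metis r4_f731 r4_f731)
  have r4_f15047: "p z x34 (p u x33 z) = p x34 x33 z" for x33 x34 by (metis r4_f69 r4_f62)
  have r4_f15149: "p x34 x33 z = p z x34 (pl u x33)" for x33 x34 by (metis r4_f15047 r4_f271)
  have r4_f23668: "p x76 x76 (p x76 x77 (p u x76 z)) = p x76 x77 z" for x76 x77 by (metis r4_f73 r4_f56)
  have r4_f24064: "p x76 x77 z = p x76 x76 (pl x76 x77)" for x76 x77 by (metis r4_f23668 r4_f63)
  have r4_f24766: "p x6 (pl x6 x7) z = p x6 x6 x7" for x6 x7 by (metis r4_f24064 r4_f719)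
  have r4_f27719: "p z x8 (pl u x9) = pl x8 (p z x8 x9)" for x8 x9 by (metis r4_f71 r4_f52)
  have r4_f27820: "p z x26 (pl x27 (ng x26)) = pl (p z x26 x27) x26" for x26 x27 by (metis r4_f71 r4_f406)
  have r4_f27996: "p x8 x9 z = pl x8 (p z x8 x9)" for x8 x9 by (metis r4_f27719 r4_f15149)
  have r4_f28233: "pl x26 (p z x26 x27) = p z x26 (pl x27 (ng x26))" for x26 x27 by (metis r4_f27820 r4_f61)
  have r4_f28234: "pl x26 (p z x26 x27) = p z x26 (pl x27 x26)" for x26 x27 by (metis r4_f28233 r4_f607)
  have r4_f28235: "p x26 x27 z = p z x26 (pl x27 x26)" for x26 x27 by (metis r4_f28234 r4_f27996)
  have r4_f32723: "p z x85 x86 = p x85 (pl x85 x86) z" for x85 x86 by (metis r4_f28235 r4_f758)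
  have r4_f55767: "p z x3 x4 = p x3 x3 x4" for x3 x4 by (metis r4_f32723 r4_f24766)
  show ?thesis by (metis r4_f55767)
qed

end
context tern4
begin

lemma BA: "is_boolean_algebra (\<lambda>a b. p a b u) (\<lambda>a b. p z a b) (\<lambda>a. p u a z) z u"
  unfolding is_boolean_algebra_def
  by (intro conjI allI) (rule jc mc ja ma ab1 ab2 dm dj t4a t1 cm cj)+

lemma BR: "is_boolean_ring (\<lambda>a b. p a b (p u a z)) (\<lambda>a b. p z a b) z u"
proof -
  interpret B: abstract_boolean_algebra_sym_diff "\<lambda>x y. p z x y" "\<lambda>x y. p x y u" "\<lambda>x. p u x z" z u "\<lambda>x y. p x y (p u x z)"
  proof unfold_locales
    fix x y :: 'a
    show "p x y (p u x z) = p (p z x (p u y z)) (p z (p u x z) y) u"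
      by (subst P3) (metis mc)
  qed (rule ma mc ja jc dm dj t1 t4a cm cj)+
  show ?thesis
    unfolding is_boolean_ring_def
  proof
    show "ring (ring_of (\<lambda>a b. p a b (p u a z)) (\<lambda>a b. p z a b) z u)"
    proof (rule ringI)
      show "abelian_group (ring_of (\<lambda>a b. p a b (p u a z)) (\<lambda>a b. p z a b) z u)"
      proof (rule abelian_groupI)
        fix x y w :: 'a
        show "(x \<oplus>\<^bsub>ring_of (\<lambda>a b. p a b (p u a z)) (\<lambda>a b. p z a b) z u\<^esub> y) \<oplus>\<^bsub>ring_of (\<lambda>a b. p a b (p u a z)) (\<lambda>a b. p z a b) z u\<^esub> w =
          x \<oplus>\<^bsub>ring_of (\<lambda>a b. p a b (p u a z)) (\<lambda>a b. p z a b) z u\<^esub> (y \<oplus>\<^bsub>ring_of (\<lambda>a b. p a b (p u a z)) (\<lambda>a b. p z a b) z u\<^esub> w)"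
          unfolding ring_of_def by simp (rule B.xor.assoc)
        show "x \<oplus>\<^bsub>ring_of (\<lambda>a b. p a b (p u a z)) (\<lambda>a b. p z a b) z u\<^esub> y = y \<oplus>\<^bsub>ring_of (\<lambda>a b. p a b (p u a z)) (\<lambda>a b. p z a b) z u\<^esub> x"
          unfolding ring_of_def by simp (rule B.xor.commute)
        show "\<exists>y\<in>carrier (ring_of (\<lambda>a b. p a b (p u a z)) (\<lambda>a b. p z a b) z u). y \<oplus>\<^bsub>ring_of (\<lambda>a b. p a b (p u a z)) (\<lambda>a b. p z a b) z u\<^esub> x = \<zero>\<^bsub>ring_of (\<lambda>a b. p a b (p u a z)) (\<lambda>a b. p z a b) z u\<^esub>"
          unfolding ring_of_def by simp (rule exI[of _ x], rule B.xor_self)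
      qed (simp_all add: ring_of_def)
      show "monoid (ring_of (\<lambda>a b. p a b (p u a z)) (\<lambda>a b. p z a b) z u)"
        by (rule monoidI) (auto simp: ring_of_def ma t1)
    qed (auto simp: ring_of_def B.conj_xor_distrib B.conj_xor_distrib2)
    show "\<forall>x. p z x x = x" using B.conj.idem by simp
  qed
qed

end

lemma ring_of_facts:
  assumes "ring (ring_of pl mu z u)"
  shows "\<And>x y w. pl (pl x y) w = pl x (pl y w)"
    and "\<And>x y. pl x y = pl y x"
    and "\<And>x. pl z x = x"
    and "\<And>x. pl x (a_inv (ring_of pl mu z u) x) = z"
    and "\<And>x y w. mu (mu x y) w = mu x (mu y w)"
    and "\<And>x. mu u x = x"
    and "\<And>x. mu x u = x"
    and "\<And>x y w. mu (pl x y) w = pl (mu x w) (mu y w)"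
    and "\<And>x y w. mu w (pl x y) = pl (mu w x) (mu w y)"
proof -
  interpret R: ring "ring_of pl mu z u" by (rule assms)
  have c: "carrier (ring_of pl mu z u) = UNIV" by (simp add: ring_of_def)
  have a: "add (ring_of pl mu z u) = pl" "mult (ring_of pl mu z u) = mu"
    "zero (ring_of pl mu z u) = z" "one (ring_of pl mu z u) = u" by (simp_all add: ring_of_def)
  show "\<And>x y w. pl (pl x y) w = pl x (pl y w)" using R.a_assoc by (simp add: a c)
  show "\<And>x y. pl x y = pl y x" using R.a_comm by (simp add: a c)
  show "\<And>x. pl z x = x" using R.l_zero by (simp add: a c)
  show "\<And>x. pl x (a_inv (ring_of pl mu z u) x) = z" using R.r_neg by (simp add: a c)
  show "\<And>x y w. mu (mu x y) w = mu x (mu y w)" using R.m_assoc by (simp add: a c)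
  show "\<And>x. mu u x = x" using R.l_one by (simp add: a c)
  show "\<And>x. mu x u = x" using R.r_one by (simp add: a c)
  show "\<And>x y w. mu (pl x y) w = pl (mu x w) (mu y w)" using R.l_distr by (simp add: a c)
  show "\<And>x y w. mu w (pl x y) = pl (mu w x) (mu w y)" using R.r_distr by (simp add: a c)
qed

theorem theorem1:
  fixes p :: "'a \<Rightarrow> 'a \<Rightarrow> 'a \<Rightarrow> 'a" and z u :: 'a
  assumes T1: "\<And>a. p z a u = a"
    and T2: "\<And>a b. p a b a = a"
    and T3: "\<And>a b1 b2 b3 c. p a (p b1 b2 b3) c = p (p a b1 c) b2 (p a b3 c)"
    and T4: "\<And>a b. p a z b = a \<and> a = p b u a"
  defines "cpl \<equiv> \<lambda>a. p u a z"
    and "mul \<equiv> \<lambda>a b. p z a b"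
    and "jn \<equiv> \<lambda>a b. p a b u"
    and "pl \<equiv> \<lambda>a b. p a b (p u a z)"
  shows "(is_boolean_algebra jn mul cpl z u \<longleftrightarrow> is_boolean_ring pl mul z u)
       \<and> (is_boolean_ring pl mul z u \<longleftrightarrow> (\<forall>a b c. p a b c = jn (mul (cpl b) a) (mul b c)))
       \<and> ((\<forall>a b c. p a b c = jn (mul (cpl b) a) (mul b c)) \<longleftrightarrow> (\<forall>a b. p a a b = mul a b))
       \<and> ((\<forall>a b. p a a b = mul a b) \<longleftrightarrow> (\<forall>a b. p a b b = jn a b))"
proof -
  interpret T: tern p z u
    by unfold_locales (use T1 T2 T3 T4 in auto)
  have P4_3: "\<forall>a b c. p a b c = p (p z (p u b z) a) (p z b c) u" if h: "\<forall>a b. p a a b = p z a b"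
  proof -
    interpret tern4 p z u by unfold_locales (use h in auto)
    show ?thesis using P3 by blast
  qed
  have P3_4: "\<forall>a b. p a a b = p z a b" if h: "\<forall>a b c. p a b c = p (p z (p u b z) a) (p z b c) u"
    using T.P3_P4 h by blast
  have P4_5: "\<forall>a b. p a b b = p a b u" if h: "\<forall>a b. p a a b = p z a b"
  proof -
    interpret tern4 p z u by unfold_locales (use h in auto)
    show ?thesis using p5 by blast
  qed
  have P5_4: "\<forall>a b. p a a b = p z a b" if h: "\<forall>a b. p a b b = p a b u"
    using T.P5_P4 h by blast
  have P4_BA: "is_boolean_algebra (\<lambda>a b. p a b u) (\<lambda>a b. p z a b) (\<lambda>a. p u a z) z u"
    if h: "\<forall>a b. p a a b = p z a b"
  proof -
    interpret tern4 p z u by unfold_locales (use h in auto)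
    show ?thesis by (rule BA)
  qed
  have P4_BR: "is_boolean_ring (\<lambda>a b. p a b (p u a z)) (\<lambda>a b. p z a b) z u"
    if h: "\<forall>a b. p a a b = p z a b"
  proof -
    interpret tern4 p z u by unfold_locales (use h in auto)
    show ?thesis by (rule BR)
  qed
  have BA_3: "\<forall>a b c. p a b c = p (p z (p u b z) a) (p z b c) u"
    if h: "is_boolean_algebra (\<lambda>a b. p a b u) (\<lambda>a b. p z a b) (\<lambda>a. p u a z) z u"
  proof -
    note hh = h[unfolded is_boolean_algebra_def]
    interpret tern_ba p z u
      by unfold_locales (use hh in meson)+
    show ?thesis using P3 by blast
  qed
  have BR_4: "\<forall>a b. p a a b = p z a b"
    if h: "is_boolean_ring (\<lambda>a b. p a b (p u a z)) (\<lambda>a b. p z a b) z u"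
  proof -
    let ?pl = "\<lambda>a b. p a b (p u a z)"
    let ?R = "ring_of ?pl (\<lambda>a b. p z a b) z u"
    have r: "ring ?R" and idm: "\<forall>x. p z x x = x" using h by (simp_all add: is_boolean_ring_def)
    note f = ring_of_facts[OF r]
    interpret tern_br p z u ?pl "a_inv ?R"
      by unfold_locales (use f idm in simp_all)
    show ?thesis using P4 by blast
  qed
  show ?thesis
    unfolding cpl_def mul_def jn_def pl_def
    using P4_3 P3_4 P4_5 P5_4 P4_BA P4_BR BA_3 BR_4 by blast
qed

end
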